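(* For all integers $\alpha\ge0$, \[ \sum_{n=0}^{\infty}b_{5}\!\left(4\cdot5^{2\alpha}n+\frac{7\cdot 5^{2\alpha}-1}{6}\right)q^{n} \equiv f(-q^2)f(-q^5) \pmod 2. \]
   Context: For a positive integer $\ell$, $b_\ell(n)$ denotes the number of partitions of $n$ having no part divisible by $\ell$. $f(-q)=\prod_{k\ge1}(1-q^k)$. A congruence between power series modulo $2$ means coefficientwise congruence. *)

theory Defs
  imports "HOL-Library.Multiset" "HOL-Computational_Algebra.Formal_Power_Series" "HOL-Number_Theory.Cong"
begin

definition b :: "nat \<Rightarrow> nat \<Rightarrow> nat" where
  "b l n = card {M :: nat multiset. (\<forall>x\<in>#M. 0 < x \<and> \<not> l dvd x) \<and> sum_mset M = n}"

text \<open>Truncation of f(-q^a) = prod_{k>=1} (1 - q^(a k)) to the factors k = 1..N.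
  For a >= 1 and N >= n its n-th coefficient agrees with that of the infinite product.\<close>
definition euler_trunc :: "nat \<Rightarrow> nat \<Rightarrow> int fps" where
  "euler_trunc a N = (\<Prod>k\<in>{1..N}. 1 - fps_X ^ (a * k))"

definition fprod_coeff :: "nat \<Rightarrow> nat \<Rightarrow> nat \<Rightarrow> int" where
  "fprod_coeff a c n = fps_nth (euler_trunc a n * euler_trunc c n) n"

end

theory Submission
  imports Defs "HOL-Library.Z2" "HOL-Computational_Algebra.Primes"
begin

unbundle fps_syntax



fun qb :: "'a::comm_ring_1 \<Rightarrow> nat \<Rightarrow> nat \<Rightarrow> 'a" where
  "qb Q 0 k = (if k = 0 then 1 else 0)"
| "qb Q (Suc m) 0 = 1"
| "qb Q (Suc m) (Suc k) = qb Q m k + Q^(Suc k) * qb Q m (Suc k)"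

definition pr :: "'a::comm_ring_1 \<Rightarrow> nat \<Rightarrow> 'a" where
  "pr Q n = (\<Prod>i\<in>{1..n}. 1 - Q^i)"

definition tri :: "int \<Rightarrow> nat" where
  "tri j = nat (j*(j+1) div 2)"

lemma qb_0 [simp]: "qb Q m 0 = 1"
  by (cases m) auto

lemma qb_gt: "m < k \<Longrightarrow> qb Q m k = 0"
proof (induction m arbitrary: k)
  case 0 then show ?case by simp
next
  case (Suc m) then show ?case by (cases k) auto
qed

lemma qb_diag [simp]: "qb Q m m = 1"
  by (induction m) (auto simp: qb_gt)

lemma qb_pascal2: "k \<le> m \<Longrightarrow> qb Q (Suc m) (Suc k) = Q^(m-k) * qb Q m k + qb Q m (Suc k)"
proof (induction m arbitrary: k)
  case 0 then show ?case by simp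
next
  case (Suc m)
  show ?case
  proof (cases k)
    case 0
    have a: "qb Q (Suc m) 1 = Q^m + qb Q m 1" using Suc.IH[of 0] by simp
    have b: "qb Q (Suc m) 1 = 1 + Q * qb Q m 1" by simp
    have "qb Q (Suc (Suc m)) (Suc 0) = 1 + Q * qb Q (Suc m) 1" by simp
    also have "\<dots> = Q^(Suc m) + qb Q (Suc m) 1"
      using a b by (simp add: algebra_simps)
    finally show ?thesis using 0 by simp
  next
    case (Suc k')
    with Suc.prems have k': "k' \<le> m" by simp
    have i1: "qb Q (Suc m) (Suc k') = Q^(m-k') * qb Q m k' + qb Q m (Suc k')"
      using Suc.IH k' by simp
    show ?thesis
    proof (cases "k' = m")
      case True
      then show ?thesis using Suc by (simp add: qb_gt)
    next
      case False
      then have k2: "Suc k' \<le> m" using k' by simp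
      have i2: "qb Q (Suc m) (Suc (Suc k')) = Q^(m - Suc k') * qb Q m (Suc k') + qb Q m (Suc (Suc k'))"
        by (rule Suc.IH[OF k2])
      have e1: "Q^(Suc (Suc k')) * Q^(m - Suc k') = Q^(Suc m)"
        proof -
 have ex: "(Suc (Suc k')) + (m - Suc k') = Suc m" using k2 by simp
 then show ?thesis by (subst power_add[symmetric]) (simp only: ex)
 qed
      have e2: "Q^(m - k') * Q^(Suc k') = (Q^(Suc m) :: 'a)"
        proof -
 have ex: "(m - k') + (Suc k') = Suc m" using k2 by simp
 then show ?thesis by (subst power_add[symmetric]) (simp only: ex)
 qed
      have "qb Q (Suc (Suc m)) (Suc k) = qb Q (Suc m) (Suc k') + Q^(Suc (Suc k')) * qb Q (Suc m) (Suc (Suc k'))"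
        using Suc by simp
      also have "\<dots> = Q^(m-k') * qb Q m k' + qb Q m (Suc k') + (Q^(Suc (Suc k')) * Q^(m - Suc k')) * qb Q m (Suc k') + Q^(Suc (Suc k')) * qb Q m (Suc (Suc k'))"
        unfolding i1 i2 by (simp only: distrib_left mult.assoc add.assoc)
      also have "\<dots> = Q^(m-k') * qb Q m k' + qb Q m (Suc k') + Q^(Suc m) * qb Q m (Suc k') + Q^(Suc (Suc k')) * qb Q m (Suc (Suc k'))"
        by (simp only: e1)
      also have "\<dots> = Q^(m - k') * (qb Q m k' + Q^(Suc k') * qb Q m (Suc k')) + (qb Q m (Suc k') + Q^(Suc (Suc k')) * qb Q m (Suc (Suc k')))"
        by (simp only: e2[symmetric]) (simp add: algebra_simps)
      also have "\<dots> = Q^(Suc m - k) * qb Q (Suc m) k + qb Q (Suc m) (Suc k)"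
        using Suc by simp
      finally show ?thesis .
    qed
  qed
qed

lemma pr_Suc: "pr Q (Suc n) = pr Q n * (1 - Q^(Suc n))"
  by (simp add: pr_def prod.nat_ivl_Suc')

lemma pr_0 [simp]: "pr Q 0 = 1" by (simp add: pr_def)

lemma qb_prod: "k \<le> m \<Longrightarrow> qb Q m k * pr Q k * pr Q (m-k) = pr Q m"
proof (induction m arbitrary: k)
  case 0 then show ?case by simp
next
  case (Suc m)
  show ?case
  proof (cases k)
    case 0 then show ?thesis by simp
  next
    case (Suc k')
    then have k': "k' \<le> m" using Suc.prems by simp
    have A: "qb Q m k' * pr Q (Suc k') * pr Q (m - k') = pr Q m * (1 - Q^(Suc k'))"
      using Suc.IH[OF k'] by (simp add: pr_Suc algebra_simps)
    have B: "Q^(Suc k') * qb Q m (Suc k') * pr Q (Suc k') * pr Q (m - k') = pr Q m * (Q^(Suc k') - Q^(Suc m))"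
    proof (cases "k' = m")
      case True then show ?thesis by (simp add: qb_gt)
    next
      case False
      then have k2: "Suc k' \<le> m" using k' by simp
      have m: "m - k' = Suc (m - Suc k')" using k2 by simp
      have e: "Q^(Suc k') * Q^(Suc (m - Suc k')) = (Q^(Suc m) :: 'a)"
        proof -
 have ex: "(Suc k') + (Suc (m - Suc k')) = Suc m" using k2 by simp
 then show ?thesis by (subst power_add[symmetric]) (simp only: ex)
 qed
      have "Q^(Suc k') * qb Q m (Suc k') * pr Q (Suc k') * pr Q (m - k')
          = Q^(Suc k') * (qb Q m (Suc k') * pr Q (Suc k') * pr Q (m - Suc k')) * (1 - Q^(Suc (m - Suc k')))"
        unfolding m by (simp add: pr_Suc algebra_simps)
      also have "\<dots> = pr Q m * (Q^(Suc k') - Q^(Suc k') * Q^(Suc (m - Suc k')))"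
        using Suc.IH[OF k2] by (simp add: algebra_simps)
      also have "\<dots> = pr Q m * (Q^(Suc k') - Q^(Suc m))" by (simp only: e)
      finally show ?thesis .
    qed
    have "qb Q (Suc m) k * pr Q k * pr Q (Suc m - k) =
        qb Q m k' * pr Q (Suc k') * pr Q (m - k') + Q^(Suc k') * qb Q m (Suc k') * pr Q (Suc k') * pr Q (m - k')"
      using Suc by (simp add: algebra_simps)
    also have "\<dots> = pr Q m * (1 - Q^(Suc k')) + pr Q m * (Q^(Suc k') - Q^(Suc m))"
      by (simp only: A B)
    also have "\<dots> = pr Q m * (1 - Q^(Suc m))" by (simp add: algebra_simps)
    finally show ?thesis by (simp add: pr_Suc)
  qed
qed

lemma qb_rec3: "qb Q (Suc (Suc m)) (Suc (Suc c)) =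
   (1 + Q^(Suc m)) * qb Q m (Suc c) + Q^(c+2) * qb Q m (c+2) + Q^(m-c) * qb Q m c"
proof (cases "c \<le> m")
  case False then show ?thesis by (simp add: qb_gt)
next
  case True
  show ?thesis
  proof (cases "c = m")
    case True then show ?thesis by (simp add: qb_gt)
  next
    case False
    with True have c: "Suc c \<le> m" by simp
    have i1: "qb Q (Suc m) (Suc c) = Q^(m-c) * qb Q m c + qb Q m (Suc c)"
      using qb_pascal2 True by blast
    have i2: "qb Q (Suc m) (Suc (Suc c)) = Q^(m - Suc c) * qb Q m (Suc c) + qb Q m (Suc (Suc c))"
      using qb_pascal2 c by blast
    have e: "Q^(Suc (Suc c)) * Q^(m - Suc c) = (Q^(Suc m) :: 'a)"
      proof -
 have ex: "(Suc (Suc c)) + (m - Suc c) = Suc m" using c by simp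
 then show ?thesis by (subst power_add[symmetric]) (simp only: ex)
 qed
    have "qb Q (Suc (Suc m)) (Suc (Suc c)) = qb Q (Suc m) (Suc c) + Q^(Suc (Suc c)) * qb Q (Suc m) (Suc (Suc c))"
      by simp
    also have "\<dots> = Q^(m-c) * qb Q m c + qb Q m (Suc c) + (Q^(Suc (Suc c)) * Q^(m - Suc c)) * qb Q m (Suc c) + Q^(Suc (Suc c)) * qb Q m (Suc (Suc c))"
      unfolding i1 i2 by (simp only: distrib_left mult.assoc add.assoc)
    also have "\<dots> = Q^(m-c) * qb Q m c + qb Q m (Suc c) + Q^(Suc m) * qb Q m (Suc c) + Q^(Suc (Suc c)) * qb Q m (Suc (Suc c))"
      by (simp only: e)
    also have "\<dots> = (1 + Q^(Suc m)) * qb Q m (Suc c) + Q^(c+2) * qb Q m (c+2) + Q^(m-c) * qb Q m c"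
      by (simp add: algebra_simps)
    finally show ?thesis .
  qed
qed

lemma qb_rec1: "qb Q (Suc (Suc m)) 1 = 1 + Q * qb Q m 1 + Q^(Suc m)"
proof -
  have "qb Q (Suc (Suc m)) (Suc 0) = Q^(Suc m) * qb Q (Suc m) 0 + qb Q (Suc m) 1"
    using qb_pascal2[of 0 "Suc m" Q] by simp
  then show ?thesis by simp
qed

lemma tri_even: "even (j*(j+1::int))"
  by simp

lemma int_tri: "int (tri j) = j*(j+1) div 2"
proof -
  have "j*(j+1) \<ge> 0"
    by (cases "j \<ge> 0") (auto simp: mult_nonneg_nonneg mult_nonpos_nonpos)
  then show ?thesis unfolding tri_def by simp
qed

lemma tri_succ: "int (tri (j+1)) = int (tri j) + j + 1"
proof -
  obtain t where t: "j*(j+1) = 2*t" using tri_even[of j] by blast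
  have "(j+1)*(j+1+1) = 2*(t + j + 1)" using t by (simp add: algebra_simps)
  then show ?thesis using t by (simp add: int_tri)
qed




lemma pw: "a + i = c \<Longrightarrow> (Q::'a::monoid_mult)^a * Q^i = Q^c"
  by (simp flip: power_add)

definition dq :: "'a::comm_ring_1 \<Rightarrow> nat \<Rightarrow> nat \<Rightarrow> 'a" where
  "dq Q n i = qb Q (2*n) i * Q^(tri (int n - int i))"

lemma dq_gt: "2*n < i \<Longrightarrow> dq Q n i = 0"
  by (simp add: dq_def qb_gt)

lemma dq_0: "dq Q (Suc n) 0 = Q^(Suc n) * dq Q n 0"
proof -
  have "int (tri (int n + 1)) = int (tri (int n)) + int n + 1" by (rule tri_succ)
  moreover have "int (Suc n) - int 0 = int n + 1" by simp
  ultimately have "int (Suc n + tri (int n)) = int (tri (int (Suc n) - int 0))" by (simp add: ac_simps)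
  then have "Suc n + tri (int n) = tri (int (Suc n) - int 0)" by (simp only: of_nat_eq_iff)
  then have "Q^(Suc n) * Q^(tri (int n)) = Q^(tri (int (Suc n) - int 0))" by (rule pw)
  then show ?thesis by (simp add: dq_def)
qed

lemma dq_1: "dq Q (Suc n) (Suc 0) = Q^(Suc n) * dq Q n (Suc 0) + (1 + Q^(2*n+1)) * dq Q n 0"
proof -
  have t: "int (tri (int n - 1 + 1)) = int (tri (int n - 1)) + (int n - 1) + 1" by (rule tri_succ)
  have "Suc n + tri (int n - 1) = 1 + tri (int n)" using t by simp
  then have e: "Q^(Suc n) * Q^(tri (int n - 1)) = Q^1 * Q^(tri (int n))"
    by (metis pw power_add)
  have "dq Q (Suc n) (Suc 0) = qb Q (Suc (Suc (2*n))) 1 * Q^(tri (int n))"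
    by (simp add: dq_def)
  also have "\<dots> = (1 + Q * qb Q (2*n) 1 + Q^(Suc (2*n))) * Q^(tri (int n))"
    by (simp only: qb_rec1)
  also have "\<dots> = (Q^1 * Q^(tri (int n))) * qb Q (2*n) 1 + (1 + Q^(2*n+1)) * Q^(tri (int n))"
    by (simp add: algebra_simps)
  also have "\<dots> = (Q^(Suc n) * Q^(tri (int n - 1))) * qb Q (2*n) 1 + (1 + Q^(2*n+1)) * Q^(tri (int n))"
    by (simp only: e)
  also have "\<dots> = Q^(Suc n) * dq Q n (Suc 0) + (1 + Q^(2*n+1)) * dq Q n 0"
    by (simp add: dq_def algebra_simps)
  finally show ?thesis .
qed

lemma dq_cc: "dq Q (Suc n) (Suc (Suc c)) =
   Q^(Suc n) * dq Q n (Suc (Suc c)) + (1 + Q^(2*n+1)) * dq Q n (Suc c) + Q^n * dq Q n c"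
proof -
  define j where "j = int n - int c - 1"
  have j1: "int (Suc n) - int (Suc (Suc c)) = j" "int n - int (Suc c) = j"
    "int n - int (Suc (Suc c)) = j - 1" "int n - int c = j + 1"
    by (simp_all add: j_def)
  have ta: "int (tri (j - 1 + 1)) = int (tri (j - 1)) + (j - 1) + 1" by (rule tri_succ)
  have tb: "int (tri (j + 1)) = int (tri j) + j + 1" by (rule tri_succ)
  have "Suc n + tri (j - 1) = Suc (Suc c) + tri j" using ta by (simp add: j_def)
  then have e1: "Q^(Suc n) * Q^(tri (j - 1)) = Q^(Suc (Suc c)) * Q^(tri j)"
    by (metis pw power_add)
  have e2: "Q^n * Q^(tri (j+1)) * qb Q (2*n) c = Q^(2*n - c) * Q^(tri j) * qb Q (2*n) c"
  proof (cases "c \<le> 2*n")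
    case True
    then have "n + tri (j+1) = (2*n - c) + tri j" using tb by (simp add: j_def)
    then show ?thesis by (metis pw power_add)
  next
    case False then show ?thesis by (simp add: qb_gt)
  qed
  have "dq Q (Suc n) (Suc (Suc c)) = qb Q (2 * Suc n) (Suc (Suc c)) * Q^(tri j)"
    unfolding dq_def j1(1) ..
  also have "\<dots> = qb Q (Suc (Suc (2*n))) (Suc (Suc c)) * Q^(tri j)" by simp
  also have "\<dots> = ((1 + Q^(Suc (2*n))) * qb Q (2*n) (Suc c) + Q^(c+2) * qb Q (2*n) (c+2) + Q^(2*n-c) * qb Q (2*n) c) * Q^(tri j)"
    by (simp only: qb_rec3)
  also have "\<dots> = (1 + Q^(2*n+1)) * (qb Q (2*n) (Suc c) * Q^(tri j)) + (Q^(Suc (Suc c)) * Q^(tri j)) * qb Q (2*n) (Suc (Suc c))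
       + Q^(2*n-c) * Q^(tri j) * qb Q (2*n) c"
    by (simp add: algebra_simps)
  also have "\<dots> = (1 + Q^(2*n+1)) * (qb Q (2*n) (Suc c) * Q^(tri j)) + (Q^(Suc n) * Q^(tri (j - 1))) * qb Q (2*n) (Suc (Suc c))
       + Q^n * Q^(tri (j+1)) * qb Q (2*n) c"
    by (simp only: e1 e2)
  also have "\<dots> = Q^(Suc n) * dq Q n (Suc (Suc c)) + (1 + Q^(2*n+1)) * dq Q n (Suc c) + Q^n * dq Q n c"
  proof -
    have d1: "dq Q n (Suc c) = qb Q (2*n) (Suc c) * Q^(tri j)" unfolding dq_def j1(2) ..
    have d2: "dq Q n (Suc (Suc c)) = qb Q (2*n) (Suc (Suc c)) * Q^(tri (j-1))" unfolding dq_def j1(3) ..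
    have d3: "dq Q n c = qb Q (2*n) c * Q^(tri (j+1))" unfolding dq_def j1(4) ..
    show ?thesis by (simp only: d1 d2 d3) (simp add: algebra_simps)
  qed
  finally show ?thesis .
qed

definition sh :: "(nat \<Rightarrow> 'a::comm_ring_1) \<Rightarrow> nat \<Rightarrow> 'a" where
  "sh f i = (if i = 0 then 0 else f (i - 1))"

lemma sum_sh: "(\<Sum>i\<le>Suc N. sh f i * y^i) = y * (\<Sum>i\<le>N. f i * y^i)"
  unfolding sum.atMost_Suc_shift by (simp add: sh_def sum_distrib_left algebra_simps del: sum.atMost_Suc)

lemma sum_ext: assumes "\<And>i. N < i \<Longrightarrow> f i = 0" "N \<le> M"
  shows "(\<Sum>i\<le>M. f i * (y::'a::comm_ring_1)^i) = (\<Sum>i\<le>N. f i * y^i)"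
proof (rule sum.mono_neutral_right)
  show "\<forall>i\<in>{..M} - {..N}. f i * y ^ i = 0" using assms(1) by auto
  show "finite {..M}" by simp
  show "{..N} \<subseteq> {..M}" using assms(2) by auto
qed

lemma dq_step: "dq Q (Suc n) i = Q^(Suc n) * dq Q n i + (1 + Q^(2*n+1)) * sh (dq Q n) i + Q^n * sh (sh (dq Q n)) i"
proof -
  consider "i = 0" | "i = 1" | c where "i = Suc (Suc c)"
    by (metis One_nat_def not0_implies_Suc)
  then show ?thesis
  proof cases
    case 1 then show ?thesis by (simp add: dq_0 sh_def)
  next
    case 2 then show ?thesis by (simp add: dq_1 sh_def)
  next
    case 3 then show ?thesis by (simp add: dq_cc sh_def)
  qed
qed

lemma jtp: "(\<Prod>k\<in>{1..n}. (y + Q^k) * (1 + y * Q^(k-1))) = (\<Sum>i\<le>2*n. dq Q n i * y^i)"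
proof (induction n)
  case 0 then show ?case by (simp add: dq_def tri_def)
next
  case (Suc n)
  define S where "S = (\<Sum>i\<le>2*n. dq Q n i * y^i)"
  have z: "\<And>i. 2*n < i \<Longrightarrow> dq Q n i = 0" by (rule dq_gt)
  have s1: "(\<Sum>i\<le>Suc (Suc (2*n)). dq Q n i * y^i) = S"
    unfolding S_def by (rule sum_ext) (use z in auto)
  have s2: "(\<Sum>i\<le>Suc (Suc (2*n)). sh (dq Q n) i * y^i) = y * S"
    unfolding sum_sh S_def by (subst sum_ext) (use z in auto)
  have s3: "(\<Sum>i\<le>Suc (Suc (2*n)). sh (sh (dq Q n)) i * y^i) = y * y * S"
    unfolding sum_sh S_def by simp
  have "(\<Sum>i\<le>2 * Suc n. dq Q (Suc n) i * y^i) =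
     (\<Sum>i\<le>Suc (Suc (2*n)). Q^(Suc n) * (dq Q n i * y^i) + (1 + Q^(2*n+1)) * (sh (dq Q n) i * y^i) + Q^n * (sh (sh (dq Q n)) i * y^i))"
    by (rule sum.cong) (simp_all add: dq_step algebra_simps)
  also have "\<dots> = Q^(Suc n) * S + (1 + Q^(2*n+1)) * (y * S) + Q^n * (y * y * S)"
    by (simp only: sum.distrib sum_distrib_left[symmetric] s1 s2 s3)
  also have "\<dots> = S * (y + Q^(Suc n) + y*y*Q^n + y * Q^(2*n+1))"
    by (simp add: algebra_simps)
  also have "\<dots> = S * (y + Q^(Suc n) + y*y*Q^n + y * (Q^(Suc n) * Q^n))"
    by (subst pw[of "Suc n" n "2*n+1"]) simp_all
  also have "\<dots> = S * ((y + Q^(Suc n)) * (1 + y * Q^n))"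
    by (simp add: algebra_simps)
  also have "\<dots> = S * ((y + Q^(Suc n)) * (1 + y * Q^(Suc n - 1)))" by simp
  finally have "(\<Sum>i\<le>2 * Suc n. dq Q (Suc n) i * y^i) = S * ((y + Q^(Suc n)) * (1 + y * Q^(Suc n - 1)))" .
  moreover have "(\<Prod>k\<in>{1..Suc n}. (y + Q^k) * (1 + y * Q^(k-1))) =
      (\<Prod>k\<in>{1..n}. (y + Q^k) * (1 + y * Q^(k-1))) * ((y + Q^(Suc n)) * (1 + y * Q^(Suc n - 1)))"
    by (simp add: prod.nat_ivl_Suc')
  ultimately show ?case using Suc.IH S_def by simp
qed




definition lo :: "nat \<Rightarrow> 'a::comm_ring_1 fps \<Rightarrow> bool" where
  "lo N f \<longleftrightarrow> (\<exists>u. f = 1 + fps_X^N * u)"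

lemma lo_1 [simp]: "lo N 1"
  unfolding lo_def by (rule exI[of _ 0]) simp

lemma lo_mult_coeff: assumes "lo N g" "k < N" shows "(f * g) $ k = f $ k"
proof -
  obtain u where u: "g = 1 + fps_X^N * u" using assms(1) unfolding lo_def by blast
  have "f * g = f + fps_X^N * (f * u)" unfolding u by (simp add: algebra_simps)
  then show ?thesis using assms(2) by (simp add: fps_X_power_mult_nth)
qed

lemma lo_coeff: assumes "lo N g" "k < N" shows "g $ k = (1::'a::comm_ring_1 fps) $ k"
  using lo_mult_coeff[OF assms, of 1] by simp

lemma lo_mult: assumes "lo N f" "lo N g" shows "lo N (f * g)"
proof -
  obtain u where u: "f = 1 + fps_X^N * u" using assms(1) unfolding lo_def by blast
  obtain v where v: "g = 1 + fps_X^N * v" using assms(2) unfolding lo_def by blast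
  have "f * g = 1 + fps_X^N * (u + v + fps_X^N * u * v)" unfolding u v by (simp add: algebra_simps)
  then show ?thesis unfolding lo_def by blast
qed

lemma lo_prod: assumes "\<And>l. l \<in> A \<Longrightarrow> lo N (f l)" shows "lo N (\<Prod>l\<in>A. f l)"
  using assms
proof (induction A rule: infinite_finite_induct)
  case (insert x F) then show ?case by (simp add: lo_mult)
qed simp_all

lemma lo_mono: assumes "M \<le> N" "lo N f" shows "lo M f"
proof -
  obtain u where u: "f = 1 + fps_X^N * u" using assms(2) unfolding lo_def by blast
  have e: "fps_X^N = fps_X^M * fps_X^(N-M)" using assms(1) by (simp flip: power_add)
  have "f = 1 + fps_X^M * (fps_X^(N-M) * u)" unfolding u e by (simp only: mult.assoc)
  then show ?thesis unfolding lo_def by blast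
qed

lemma lo_1mX: assumes "N \<le> k" shows "lo N (1 - fps_X^k :: 'a::comm_ring_1 fps)"
proof -
  have "fps_X^k = fps_X^N * fps_X^(k-N)" using assms by (simp flip: power_add)
  then have "(1 - fps_X^k :: 'a fps) = 1 + fps_X^N * (-(fps_X^(k-N)))" by simp
  then show ?thesis unfolding lo_def by blast
qed

lemma lo_1pX: assumes "N \<le> k" shows "lo N (1 + fps_X^k :: 'a::comm_ring_1 fps)"
proof -
  have "fps_X^k = fps_X^N * fps_X^(k-N)" using assms by (simp flip: power_add)
  then have "(1 + fps_X^k :: 'a fps) = 1 + fps_X^N * (fps_X^(k-N))" by simp
  then show ?thesis unfolding lo_def by blast
qed

lemma pr_split: assumes "a \<le> c" shows "pr Q c = pr Q a * (\<Prod>l\<in>{Suc a..c}. 1 - Q^l)"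
proof -
  have "{1..c} = {1..a} \<union> {Suc a..c}" using assms by auto
  then show ?thesis unfolding pr_def by (simp add: prod.union_disjoint)
qed

lemma lo_pr_tail: assumes "r * Suc a \<ge> N"
  shows "lo N (\<Prod>l\<in>{Suc a..c}. 1 - (fps_X^r :: 'a::comm_ring_1 fps)^l)"
proof (rule lo_prod)
  fix l assume "l \<in> {Suc a..c}"
  then have "r * Suc a \<le> r * l" by (intro mult_le_mono2) simp
  then show "lo N (1 - (fps_X^r :: 'a fps)^l)" using assms
    by (simp add: lo_1mX flip: power_mult)
qed

lemma pr_X_lo1: assumes "r \<ge> 1" shows "lo 1 (pr (fps_X^r :: 'a::comm_ring_1 fps) n)"
  unfolding pr_def using lo_pr_tail[of 1 r 0 n] assms by simp

lemma pr_X_nz: assumes "r \<ge> 1" shows "pr (fps_X^r :: 'a::{comm_ring_1,zero_neq_one} fps) n \<noteq> 0"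
proof
  assume z: "pr (fps_X^r :: 'a fps) n = 0"
  have "pr (fps_X^r :: 'a fps) n $ 0 = 1" using lo_coeff[OF pr_X_lo1[OF assms, of n], of 0] by simp
  then show False using z by simp
qed

lemma qbpr_lo: assumes r: "r \<ge> 1" and i: "i \<le> 2*n"
  shows "lo (r * (min i (2*n-i) + 1)) (qb (fps_X^r :: 'a::idom fps) (2*n) i * pr (fps_X^r) n)"
proof -
  let ?Q = "fps_X^r :: 'a fps"
  have base: "qb ?Q (2*n) i * pr ?Q i * pr ?Q (2*n - i) = pr ?Q (2*n)"
    using qb_prod i by blast
  show ?thesis
  proof (cases "i \<le> n")
    case True
    define R1 where "R1 = (\<Prod>l\<in>{Suc i..n}. 1 - ?Q^l)"
    define R2 where "R2 = (\<Prod>l\<in>{Suc (2*n-i)..2*n}. 1 - ?Q^l)"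
    have p1: "pr ?Q n = pr ?Q i * R1" unfolding R1_def using True by (rule pr_split)
    have p2: "pr ?Q (2*n) = pr ?Q (2*n-i) * R2" unfolding R2_def by (rule pr_split) simp
    have "(pr ?Q i * pr ?Q (2*n - i)) * (qb ?Q (2*n) i * pr ?Q n) = (qb ?Q (2*n) i * pr ?Q i * pr ?Q (2*n - i)) * pr ?Q n"
      by (simp only: ac_simps)
    also have "\<dots> = pr ?Q (2*n) * pr ?Q n" by (simp only: base)
    also have "\<dots> = (pr ?Q i * pr ?Q (2*n - i)) * (R1 * R2)" unfolding p1 p2 by (simp only: ac_simps)
    finally have "(pr ?Q i * pr ?Q (2*n - i)) * (qb ?Q (2*n) i * pr ?Q n) = (pr ?Q i * pr ?Q (2*n - i)) * (R1 * R2)" .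
    moreover have "pr ?Q i * pr ?Q (2*n - i) \<noteq> 0" using pr_X_nz[OF r, of i] pr_X_nz[OF r, of "2*n-i"] by simp
    ultimately have eq: "qb ?Q (2*n) i * pr ?Q n = R1 * R2" by simp
    have "lo (r * Suc i) R1" unfolding R1_def by (rule lo_pr_tail) simp
    moreover have "lo (r * Suc i) R2" unfolding R2_def
    proof (rule lo_pr_tail)
      show "r * Suc i \<le> r * Suc (2 * n - i)" using True by (intro mult_le_mono2) simp
    qed
    ultimately have "lo (r * Suc i) (R1 * R2)" by (rule lo_mult)
    then show ?thesis using True eq by simp
  next
    case False
    define R1 where "R1 = (\<Prod>l\<in>{Suc (2*n-i)..n}. 1 - ?Q^l)"
    define R2 where "R2 = (\<Prod>l\<in>{Suc i..2*n}. 1 - ?Q^l)"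
    have p1: "pr ?Q n = pr ?Q (2*n-i) * R1" unfolding R1_def using False by (intro pr_split) simp
    have p2: "pr ?Q (2*n) = pr ?Q i * R2" unfolding R2_def using i by (rule pr_split)
    have "(pr ?Q i * pr ?Q (2*n - i)) * (qb ?Q (2*n) i * pr ?Q n) = (qb ?Q (2*n) i * pr ?Q i * pr ?Q (2*n - i)) * pr ?Q n"
      by (simp only: ac_simps)
    also have "\<dots> = pr ?Q (2*n) * pr ?Q n" by (simp only: base)
    also have "\<dots> = (pr ?Q i * pr ?Q (2*n - i)) * (R1 * R2)" unfolding p1 p2 by (simp only: ac_simps)
    finally have "(pr ?Q i * pr ?Q (2*n - i)) * (qb ?Q (2*n) i * pr ?Q n) = (pr ?Q i * pr ?Q (2*n - i)) * (R1 * R2)" .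
    moreover have "pr ?Q i * pr ?Q (2*n - i) \<noteq> 0" using pr_X_nz[OF r, of i] pr_X_nz[OF r, of "2*n-i"] by simp
    ultimately have eq: "qb ?Q (2*n) i * pr ?Q n = R1 * R2" by simp
    have "lo (r * Suc (2*n-i)) R1" unfolding R1_def by (rule lo_pr_tail) simp
    moreover have "lo (r * Suc (2*n-i)) R2" unfolding R2_def
    proof (rule lo_pr_tail)
      show "r * Suc (2*n-i) \<le> r * Suc i" using False by (intro mult_le_mono2) simp
    qed
    ultimately have "lo (r * Suc (2*n-i)) (R1 * R2)" by (rule lo_mult)
    then show ?thesis using False eq by simp
  qed
qed

lemma sum_indicator: assumes "finite A" shows "(\<Sum>i\<in>A. if P i then 1 else 0) = (of_nat (card {i\<in>A. P i}) :: 'a::comm_semiring_1)"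
proof -
  have "(\<Sum>i\<in>A. if P i then 1 else 0) = (\<Sum>i\<in>{i\<in>A. P i}. (1::'a))"
    by (rule sum.inter_filter[OF assms, symmetric])
  also have "\<dots> = of_nat (card {i\<in>A. P i})" by simp
  finally show ?thesis .
qed

lemma coeff_extract:
  fixes e :: "nat \<Rightarrow> nat"
  assumes r: "r \<ge> 1"
    and bnd: "\<And>i. i \<le> 2*n \<Longrightarrow> e i \<le> K \<Longrightarrow> K - e i < r * (min i (2*n-i) + 1)"
  shows "(\<Sum>i\<le>2*n. (qb (fps_X^r :: 'a::idom fps) (2*n) i * pr (fps_X^r) n) * fps_X^(e i)) $ K
     = of_nat (card {i\<in>{..2*n}. e i = K})"
proof -
  have "\<And>i. i \<in> {..2*n} \<Longrightarrow> ((qb (fps_X^r :: 'a fps) (2*n) i * pr (fps_X^r) n) * fps_X^(e i)) $ K = (if e i = K then 1 else 0)"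
  proof -
    fix i assume "i \<in> {..2*n}"
    then have i: "i \<le> 2*n" by simp
    show "((qb (fps_X^r :: 'a fps) (2*n) i * pr (fps_X^r) n) * fps_X^(e i)) $ K = (if e i = K then 1 else 0)"
    proof (cases "e i \<le> K")
      case True
      have "((qb (fps_X^r :: 'a fps) (2*n) i * pr (fps_X^r) n) * fps_X^(e i)) $ K
          = (qb (fps_X^r :: 'a fps) (2*n) i * pr (fps_X^r) n) $ (K - e i)"
        using True by (simp add: fps_X_power_mult_right_nth)
      also have "\<dots> = (1::'a fps) $ (K - e i)"
        by (rule lo_coeff[OF qbpr_lo[OF r i] bnd[OF i True]])
      finally show ?thesis using True by auto
    next
      case False then show ?thesis by (simp add: fps_X_power_mult_right_nth)
    qed
  qed
  then have "(\<Sum>i\<le>2*n. (qb (fps_X^r :: 'a::idom fps) (2*n) i * pr (fps_X^r) n) * fps_X^(e i)) $ K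
      = (\<Sum>i\<le>2*n. if e i = K then 1 else 0)"
    unfolding fps_sum_nth by (rule sum.cong[OF refl])
  then show ?thesis by (simp add: sum_indicator)
qed




definition pent :: "int \<Rightarrow> nat" where
  "pent j = nat (j*(3*j-1) div 2)"

lemma pent_even: "even (j*(3*j-1::int))"
  by (cases "even j") auto

lemma pent_nonneg: "0 \<le> j*(3*j-1::int)"
  by (cases "j \<ge> 1") (auto simp: mult_nonneg_nonneg mult_nonpos_nonpos)

lemma two_pent: "2 * int (pent j) = j*(3*j-1)"
  using pent_even[of j] pent_nonneg[of j] unfolding pent_def by simp

lemma two_tri: "2 * int (tri j) = j*(j+1)"
  using tri_even[of j] int_tri[of j] by simp

lemma consec_nonneg: "0 \<le> j*(j-1::int)"
  by (cases "j \<ge> 1") (auto simp: mult_nonneg_nonneg mult_nonpos_nonpos)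

lemma pent_ge: "\<bar>j\<bar> \<le> int (pent j)"
proof -
  have a: "0 \<le> j*(j-1)" by (rule consec_nonneg)
  have b: "0 \<le> (j+1)*j" using consec_nonneg[of "j+1"] by simp
  have "2 * int (pent j) = 3*(j*(j-1)) + 2*j" unfolding two_pent by (simp add: algebra_simps)
  moreover have "2 * int (pent j) = 3*((j+1)*j) - 4*j" unfolding two_pent by (simp add: algebra_simps)
  ultimately show ?thesis using a b by (cases "j \<ge> 0") auto
qed

lemma tri_ge: "\<bar>j\<bar> \<le> int (tri j) + 1"
proof -
  have a: "0 \<le> j*(j-1)" by (rule consec_nonneg)
  have b: "0 \<le> (j+2)*(j+1)" using consec_nonneg[of "j+2"] by (simp add: add.commute)
  have "2 * int (tri j) = j*(j-1) + 2*j" unfolding two_tri by (simp add: algebra_simps)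
  moreover have "2 * int (tri j) = (j+2)*(j+1) - 2*j - 2" unfolding two_tri by (simp add: algebra_simps)
  ultimately show ?thesis using a b by (cases "j \<ge> 0") auto
qed

lemma tri_neg: "tri (-1 - j) = tri j"
proof -
  have "2 * int (tri (-1 - j)) = 2 * int (tri j)" unfolding two_tri by (simp add: algebra_simps)
  then show ?thesis by simp
qed

lemma exp_pent: "3 * tri (int n - int i) + 2 * i = 2 * n + pent (int n - int i)"
proof -
  define j where "j = int n - int i"
  have "2 * int (3 * tri j + 2 * i) = 2 * int (2 * n + pent j)"
    using two_tri[of j] two_pent[of j] unfolding j_def by (simp add: algebra_simps)
  then show ?thesis unfolding j_def by simp
qed

lemma card_shift:
  assumes "\<And>j. P j \<Longrightarrow> \<bar>j\<bar> \<le> int n"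
  shows "card {i\<in>{..2*n}. P (int n - int i)} = card {j. P j}"
proof -
  have inj: "inj_on (\<lambda>i. int n - int i) {i\<in>{..2*n}. P (int n - int i)}"
    by (auto simp: inj_on_def)
  have "(\<lambda>i. int n - int i) ` {i\<in>{..2*n}. P (int n - int i)} = {j. P j}"
  proof (intro equalityI subsetI)
    fix j assume j: "j \<in> {j. P j}"
    then have a: "\<bar>j\<bar> \<le> int n" using assms by simp
    define i where "i = nat (int n - j)"
    have "int i = int n - j" unfolding i_def using a by simp
    then have "i \<le> 2*n" "int n - int i = j" using a by auto
    then show "j \<in> (\<lambda>i. int n - int i) ` {i\<in>{..2*n}. P (int n - int i)}"
      using j by (auto intro!: image_eqI[of _ _ i])
  qed auto
  then show ?thesis using card_image[OF inj] by simp
qed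

lemma finite_tri: "finite {k::nat. tri (int k) = m}"
proof (rule finite_subset)
  show "{k::nat. tri (int k) = m} \<subseteq> {..m+1}"
  proof
    fix k assume "k \<in> {k::nat. tri (int k) = m}"
    then show "k \<in> {..m+1}" using tri_ge[of "int k"] by auto
  qed
qed simp

lemma card_tri_double: "card {j::int. tri j = m} = 2 * card {k::nat. tri (int k) = m}"
proof -
  define S where "S = {k::nat. tri (int k) = m}"
  have fS: "finite S" unfolding S_def by (rule finite_tri)
  have eq: "{j::int. tri j = m} = int ` S \<union> (\<lambda>k. -1 - int k) ` S"
  proof (intro equalityI subsetI)
    fix j assume j: "j \<in> {j::int. tri j = m}"
    show "j \<in> int ` S \<union> (\<lambda>k. -1 - int k) ` S"
    proof (cases "j \<ge> 0")
      case True
      then have "j = int (nat j)" by simp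
      moreover have "nat j \<in> S" using j True unfolding S_def by simp
      ultimately show ?thesis by blast
    next
      case False
      define k where "k = nat (-1 - j)"
      have "int k = -1 - j" using False unfolding k_def by simp
      then have "j = -1 - int k" "tri (int k) = m" using j tri_neg[of j] by auto
      then show ?thesis unfolding S_def by blast
    qed
  next
    fix j assume "j \<in> int ` S \<union> (\<lambda>k. -1 - int k) ` S"
    then show "j \<in> {j::int. tri j = m}" unfolding S_def using tri_neg by auto
  qed
  have "card (int ` S \<union> (\<lambda>k. -1 - int k) ` S) = card (int ` S) + card ((\<lambda>k. -1 - int k) ` S)"
    by (rule card_Un_disjoint) (use fS in auto)
  also have "\<dots> = card S + card S"
    by (subst card_image, simp add: inj_on_def)+ simp
  finally show ?thesis using eq S_def by simp
qed

lemma bit_add_self [simp]: "(a::bit) + a = 0"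
  by (cases a) simp_all

lemma bit_fps_uminus: "- (f::bit fps) = f"
  by (simp add: fps_eq_iff)

lemma bit_fps_plus_minus: "(f::bit fps) + g = f - g"
  using bit_fps_uminus[of g] by (metis diff_conv_add_uminus)

lemma pr_stable: assumes "m \<le> a" "a \<le> c" and r1: "r \<ge> 1"
  shows "pr (fps_X^r :: 'a::comm_ring_1 fps) c $ m = pr (fps_X^r) a $ m"
proof -
  have "pr (fps_X^r :: 'a fps) c = pr (fps_X^r) a * (\<Prod>l\<in>{Suc a..c}. 1 - (fps_X^r)^l)"
    using assms(2) by (rule pr_split)
  moreover have "lo (Suc a) (\<Prod>l\<in>{Suc a..c}. 1 - (fps_X^r :: 'a fps)^l)"
  proof (rule lo_pr_tail)
    show "Suc a \<le> r * Suc a" using r1 mult_le_mono1[of 1 r "Suc a"] by simp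
  qed
  ultimately show ?thesis using lo_mult_coeff assms(1) by (metis le_imp_less_Suc)
qed




lemma prod_Suc1: "(\<Prod>k\<in>{1..Suc n}. f k) = (\<Prod>k\<in>{1..n}. f k) * (f (Suc n) :: 'a::comm_monoid_mult)"
  by (simp add: prod.nat_ivl_Suc')

lemma pr3: "(\<Prod>k\<in>{1..n}. (1 - fps_X^(3*k-2)) * (1 - fps_X^(3*k-1))) * pr (fps_X^3) n
   = pr (fps_X :: 'a::comm_ring_1 fps) (3*n)"
proof (induction n)
  case 0 then show ?case by simp
next
  case (Suc n)
  have e: "3 * Suc n = Suc (Suc (Suc (3*n)))" by simp
  have f: "(fps_X^3)^(Suc n) = (fps_X :: 'a fps)^(Suc (Suc (Suc (3*n))))"
    by (subst power_mult[symmetric]) (simp only: e)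
  have g: "3 * Suc n - 2 = Suc (3*n)" "3 * Suc n - 1 = Suc (Suc (3*n))" by simp_all
  have "(\<Prod>k\<in>{1..Suc n}. (1 - fps_X^(3*k-2)) * (1 - fps_X^(3*k-1))) * pr (fps_X^3) (Suc n)
     = ((\<Prod>k\<in>{1..n}. (1 - fps_X^(3*k-2)) * (1 - fps_X^(3*k-1))) * pr (fps_X^3) n)
        * ((1 - fps_X^(Suc (3*n))) * (1 - fps_X^(Suc (Suc (3*n)))) * (1 - (fps_X :: 'a fps)^(Suc (Suc (Suc (3*n))))))"
    unfolding prod_Suc1 pr_Suc f g by (simp only: ac_simps)
  also have "\<dots> = pr (fps_X :: 'a fps) (3 * Suc n)"
    unfolding Suc.IH e pr_Suc by (simp only: ac_simps)
  finally show ?case .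
qed

lemma euler_bit: assumes "m \<le> N"
  shows "pr (fps_X::bit fps) N $ m = of_nat (card {j::int. pent j = m})"
proof -
  let ?X = "fps_X :: bit fps"
  have A: "(\<Prod>k\<in>{1..m}. (?X^2 + (?X^3)^k) * (1 + ?X^2 * (?X^3)^(k-1)))
     = (\<Sum>i\<le>2*m. dq (?X^3) m i * (?X^2)^i)" by (rule jtp)
  have B: "(?X^2 + (?X^3)^k) * (1 + ?X^2 * (?X^3)^(k-1)) = ?X^2 * ((1 - ?X^(3*k-2)) * (1 - ?X^(3*k-1)))"
    if "k \<in> {1..m}" for k
  proof -
    from that have k: "k \<ge> 1" by simp
    have e1: "(?X^3)^k = ?X^2 * ?X^(3*k-2)"
    proof -
      have "(?X^3)^k = ?X^(3*k)" by (simp add: power_mult)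
      also have "\<dots> = ?X^(2 + (3*k-2))" using k by (intro arg_cong[where f="\<lambda>t. ?X^t"]) simp
      also have "\<dots> = ?X^2 * ?X^(3*k-2)" by (rule power_add)
      finally show ?thesis .
    qed
    have e2: "?X^2 * (?X^3)^(k-1) = ?X^(3*k-1)"
    proof -
      have "?X^2 * (?X^3)^(k-1) = ?X^2 * ?X^(3*(k-1))" by (simp only: power_mult)
      also have "\<dots> = ?X^(2 + 3*(k-1))" by (rule power_add[symmetric])
      also have "\<dots> = ?X^(3*k-1)" using k by (intro arg_cong[where f="\<lambda>t. ?X^t"]) simp
      finally show ?thesis .
    qed
    have "(?X^2 + (?X^3)^k) * (1 + ?X^2 * (?X^3)^(k-1)) = (?X^2 * (1 + ?X^(3*k-2))) * (1 + ?X^(3*k-1))"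
      unfolding e1 e2 by (simp add: algebra_simps)
    also have "\<dots> = ?X^2 * ((1 - ?X^(3*k-2)) * (1 - ?X^(3*k-1)))"
      by (simp add: bit_fps_plus_minus)
    finally show ?thesis .
  qed
  have C: "(\<Prod>k\<in>{1..m}. (?X^2 + (?X^3)^k) * (1 + ?X^2 * (?X^3)^(k-1)))
      = ?X^(2*m) * (\<Prod>k\<in>{1..m}. (1 - ?X^(3*k-2)) * (1 - ?X^(3*k-1)))"
  proof -
    have "(\<Prod>k\<in>{1..m}. (?X^2 + (?X^3)^k) * (1 + ?X^2 * (?X^3)^(k-1)))
       = (\<Prod>k\<in>{1..m}. ?X^2 * ((1 - ?X^(3*k-2)) * (1 - ?X^(3*k-1))))"
      by (rule prod.cong[OF refl]) (rule B)
    also have "\<dots> = (\<Prod>k\<in>{1..m}. ?X^2) * (\<Prod>k\<in>{1..m}. (1 - ?X^(3*k-2)) * (1 - ?X^(3*k-1)))"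
      by (rule prod.distrib)
    also have "(\<Prod>k\<in>{1..m}. ?X^2) = ?X^(2*m)" by (simp add: power_mult)
    finally show ?thesis .
  qed
  define e where "e i = 2*m + pent (int m - int i)" for i
  have D: "dq (?X^3) m i * (?X^2)^i * pr (?X^3) m = (qb (?X^3) (2*m) i * pr (?X^3) m) * ?X^(e i)" for i
  proof -
    have "(?X^3)^(tri (int m - int i)) * (?X^2)^i = ?X^(3 * tri (int m - int i) + 2 * i)"
      by (simp add: power_mult[symmetric] power_add)
    also have "\<dots> = ?X^(e i)" unfolding e_def exp_pent ..
    finally have "(?X^3)^(tri (int m - int i)) * (?X^2)^i = ?X^(e i)" .
    then show ?thesis unfolding dq_def by (simp add: ac_simps)
  qed
  have E: "?X^(2*m) * pr ?X (3*m) = (\<Sum>i\<le>2*m. (qb (?X^3) (2*m) i * pr (?X^3) m) * ?X^(e i))"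
  proof -
    have "?X^(2*m) * pr ?X (3*m) = ?X^(2*m) * ((\<Prod>k\<in>{1..m}. (1 - ?X^(3*k-2)) * (1 - ?X^(3*k-1))) * pr (?X^3) m)"
      by (simp only: pr3)
    also have "\<dots> = (\<Sum>i\<le>2*m. dq (?X^3) m i * (?X^2)^i) * pr (?X^3) m"
      unfolding A[symmetric] C by (simp only: ac_simps)
    also have "\<dots> = (\<Sum>i\<le>2*m. (qb (?X^3) (2*m) i * pr (?X^3) m) * ?X^(e i))"
      by (simp add: sum_distrib_right D)
    finally show ?thesis .
  qed
  have bnd: "2*m + m - e i < 3 * (min i (2*m-i) + 1)" if "i \<le> 2*m" "e i \<le> 2*m + m" for i
  proof -
    define j where "j = int m - int i"
    have pj: "\<bar>j\<bar> \<le> int (pent j)" by (rule pent_ge)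
    have le: "int (pent j) \<le> int m" using that(2) unfolding e_def j_def by simp
    have mn: "int (min i (2*m-i)) = int m - \<bar>j\<bar>" using that(1) unfolding j_def by auto
    have x: "int (2*m + m - e i) = int m - int (pent j)" using le unfolding e_def j_def by simp
    have "int (2*m + m - e i) < 3 * (int (min i (2*m-i)) + 1)" using x mn pj le by (smt (verit))
    then have "int (2*m + m - e i) < int (3 * (min i (2*m-i) + 1))" by simp
    then show ?thesis by (simp only: of_nat_less_iff)
  qed
  have F: "pr ?X (3*m) $ m = of_nat (card {i\<in>{..2*m}. e i = 2*m + m})"
  proof -
    have "pr ?X (3*m) $ m = (?X^(2*m) * pr ?X (3*m)) $ (2*m + m)"
      by (simp add: fps_X_power_mult_nth)
    also have "\<dots> = of_nat (card {i\<in>{..2*m}. e i = 2*m + m})"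
      unfolding E by (rule coeff_extract) (use bnd in auto)
    finally show ?thesis .
  qed
  have G: "card {i\<in>{..2*m}. e i = 2*m + m} = card {j::int. pent j = m}"
  proof -
    have "{i\<in>{..2*m}. e i = 2*m + m} = {i\<in>{..2*m}. pent (int m - int i) = m}"
      unfolding e_def by auto
    also have "card \<dots> = card {j::int. pent j = m}"
      by (rule card_shift) (use pent_ge in force)
    finally show ?thesis by simp
  qed
  have H: "pr ?X N $ m = pr ?X (3*m) $ m"
  proof -
    have "pr (?X^1) N $ m = pr (?X^1) m $ m" by (rule pr_stable) (use assms in auto)
    moreover have "pr (?X^1) (3*m) $ m = pr (?X^1) m $ m" by (rule pr_stable) auto
    ultimately show ?thesis by simp
  qed
  show ?thesis using F G H by simp
qed




definition A :: "nat \<Rightarrow> 'a::comm_ring_1 fps" where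
  "A n = (\<Prod>k\<in>{1..n}. 1 + fps_X^k)"

lemma gauss_int:
  "(pr (fps_X::int fps) (Suc m) * A (Suc m) * A m) $ m = int (card {k::nat. tri (int k) = m})"
proof -
  let ?X = "fps_X :: int fps"
  define n where "n = Suc m"
  have J: "(\<Prod>k\<in>{1..n}. (1 + ?X^k) * (1 + 1 * ?X^(k-1))) = (\<Sum>i\<le>2*n. dq ?X n i * 1^i)"
    by (rule jtp)
  have L1: "(\<Prod>k\<in>{1..n}. (1 + ?X^(k-1))) = 2 * A m"
  proof -
    have "(\<Prod>k\<in>{1..n}. (1 + ?X^(k-1))) = (\<Prod>k\<in>{0..m}. (1 + ?X^k))"
      unfolding n_def using prod.shift_bounds_cl_Suc_ivl[of "\<lambda>k. 1 + ?X^(k-1)" 0 m] by simp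
    also have "\<dots> = (1 + ?X^0) * (\<Prod>k\<in>{1..m}. (1 + ?X^k))"
      by (subst prod.atLeast_Suc_atMost) simp_all
    finally show ?thesis unfolding A_def by simp
  qed
  have L: "(\<Prod>k\<in>{1..n}. (1 + ?X^k) * (1 + 1 * ?X^(k-1))) = 2 * (A n * A m)"
    using L1 unfolding A_def by (simp add: prod.distrib)
  have M: "2 * (pr ?X n * A n * A m) = (\<Sum>i\<le>2*n. (qb (?X^1) (2*n) i * pr (?X^1) n) * ?X^(tri (int n - int i)))"
  proof -
    have "2 * (pr ?X n * A n * A m) = (\<Sum>i\<le>2*n. dq ?X n i * 1^i) * pr ?X n"
      unfolding J[symmetric] L by (simp add: ac_simps)
    also have "\<dots> = (\<Sum>i\<le>2*n. (qb (?X^1) (2*n) i * pr (?X^1) n) * ?X^(tri (int n - int i)))"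
      by (simp add: sum_distrib_right sum_distrib_left dq_def ac_simps)
    finally show ?thesis .
  qed
  have bnd: "m - tri (int n - int i) < 1 * (min i (2*n-i) + 1)"
    if "i \<le> 2*n" "tri (int n - int i) \<le> m" for i
  proof -
    define j where "j = int n - int i"
    have pj: "\<bar>j\<bar> \<le> int (tri j) + 1" by (rule tri_ge)
    have le: "int (tri j) \<le> int m" using that(2) unfolding j_def by simp
    have mn: "int (min i (2*n-i)) = int n - \<bar>j\<bar>" using that(1) unfolding j_def by auto
    have x: "int (m - tri j) = int m - int (tri j)" using le by simp
    have "int (m - tri j) < int (min i (2*n-i)) + 1" using x mn pj le n_def by (smt (verit) of_nat_Suc)
    then have "int (m - tri j) < int (min i (2*n-i) + 1)" by (simp only: of_nat_add of_nat_1)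
    then have "m - tri j < min i (2*n-i) + 1" by (simp only: of_nat_less_iff)
    then show ?thesis unfolding j_def by (simp only: mult_1)
  qed
  have C: "2 * (pr ?X n * A n * A m) $ m = int (card {i\<in>{..2*n}. tri (int n - int i) = m})"
  proof -
    have "(2 * (pr ?X n * A n * A m)) $ m = int (card {i\<in>{..2*n}. tri (int n - int i) = m})"
      unfolding M by (rule coeff_extract) (use bnd in auto)
    moreover have "(2 * (pr ?X n * A n * A m)) $ m = 2 * (pr ?X n * A n * A m) $ m"
      by (simp only: mult_2 fps_add_nth)
    ultimately show ?thesis by simp
  qed
  have D: "card {i\<in>{..2*n}. tri (int n - int i) = m} = card {j::int. tri j = m}"
  proof (rule card_shift)
    fix j assume "tri j = m"
    then show "\<bar>j\<bar> \<le> int n" using tri_ge[of j] unfolding n_def by simp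
  qed
  have "2 * (pr ?X n * A n * A m) $ m = 2 * int (card {k::nat. tri (int k) = m})"
    using C D card_tri_double[of m] by simp
  then show ?thesis unfolding n_def by simp
qed

definition red :: "int fps \<Rightarrow> bit fps" where
  "red f = Abs_fps (\<lambda>k. of_int (f $ k))"

lemma red_nth [simp]: "red f $ k = of_int (f $ k)"
  by (simp add: red_def)

lemma red_mult: "red (f * g) = red f * red g"
  by (simp add: fps_eq_iff fps_mult_nth)

lemma red_add: "red (f + g) = red f + red g"
  by (simp add: fps_eq_iff)

lemma red_diff: "red (f - g) = red f - red g"
  by (simp add: fps_eq_iff)

lemma red_one [simp]: "red 1 = 1"
  by (simp add: fps_eq_iff)

lemma red_X_power [simp]: "red (fps_X^k) = fps_X^k"
  by (simp add: fps_eq_iff)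

lemma red_prod: "red (\<Prod>l\<in>S. f l) = (\<Prod>l\<in>S. red (f l))"
  by (induction S rule: infinite_finite_induct) (simp_all add: red_mult)

lemma red_pr: "red (pr (fps_X^r) n) = pr (fps_X^r) n"
  unfolding pr_def red_prod by (simp add: red_diff flip: power_mult)

lemma red_A: "red (A n) = pr (fps_X::bit fps) n"
  unfolding A_def pr_def red_prod by (simp add: red_add bit_fps_plus_minus)

lemma gauss_bit:
  "(pr (fps_X::bit fps) (Suc m) * pr fps_X (Suc m) * pr fps_X m) $ m = of_nat (card {k::nat. tri (int k) = m})"
proof -
  have "red (pr (fps_X::int fps) (Suc m) * A (Suc m) * A m) $ m = of_int (int (card {k::nat. tri (int k) = m}))"
    using gauss_int[of m] by simp
  moreover have "red (pr (fps_X::int fps) (Suc m) * A (Suc m) * A m) = pr (fps_X::bit fps) (Suc m) * pr fps_X (Suc m) * pr fps_X m"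
    using red_pr[of 1] by (simp add: red_mult red_A)
  ultimately show ?thesis by simp
qed




definition pc :: "nat set \<Rightarrow> nat \<Rightarrow> nat" where
  "pc S n = card {M :: nat multiset. set_mset M \<subseteq> S \<and> sum_mset M = n}"

lemma elem_le_sum: assumes "x \<in># M" shows "x \<le> sum_mset (M :: nat multiset)"
proof -
  obtain M' where "M = add_mset x M'" using multi_member_split[OF assms] by blast
  then have "sum_mset M = x + sum_mset M'" by simp
  then show ?thesis by simp
qed

lemma size_le_sum: "(\<forall>x\<in>#M. 0 < x) \<Longrightarrow> size M \<le> sum_mset (M :: nat multiset)"
proof (induction M)
  case empty then show ?case by simp
next
  case (add x M)
  then have "size M \<le> sum_mset M" "0 < x" by simp_all
  then show ?case by simp
qed

lemma fin_parts: assumes "0 \<notin> S"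
  shows "finite {M :: nat multiset. set_mset M \<subseteq> S \<and> sum_mset M = n}"
proof (rule finite_subset)
  show "{M :: nat multiset. set_mset M \<subseteq> S \<and> sum_mset M = n} \<subseteq> (\<Union>s\<in>{..n}. multisets_of_size {..n} s)"
  proof
    fix M assume M: "M \<in> {M :: nat multiset. set_mset M \<subseteq> S \<and> sum_mset M = n}"
    then have pos: "\<forall>x\<in>#M. 0 < x" using assms by (metis gr0I mem_Collect_eq subsetD)
    have "size M \<le> n" using size_le_sum[OF pos] M by simp
    moreover have "set_mset M \<subseteq> {..n}" using M elem_le_sum by fastforce
    ultimately show "M \<in> (\<Union>s\<in>{..n}. multisets_of_size {..n} s)"
      unfolding multisets_of_size_def by auto
  qed
  show "finite (\<Union>s\<in>{..n}. multisets_of_size {..n} s)" by auto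
qed

lemma pc_rec: assumes "a \<notin> S" "0 < a" "0 \<notin> S"
  shows "pc (insert a S) n = pc S n + (if a \<le> n then pc (insert a S) (n - a) else 0)"
proof -
  define T where "T = {M :: nat multiset. set_mset M \<subseteq> insert a S \<and> sum_mset M = n}"
  have z: "0 \<notin> insert a S" using assms by auto
  have fT: "finite T" unfolding T_def by (rule fin_parts[OF z])
  have T1: "{M\<in>T. a \<notin># M} = {M. set_mset M \<subseteq> S \<and> sum_mset M = n}"
    unfolding T_def using assms(1) by auto
  have T2: "{M\<in>T. a \<in># M} = (if a \<le> n then add_mset a ` {M. set_mset M \<subseteq> insert a S \<and> sum_mset M = n - a} else {})"
  proof (cases "a \<le> n")
    case True
    have "{M\<in>T. a \<in># M} = add_mset a ` {M. set_mset M \<subseteq> insert a S \<and> sum_mset M = n - a}"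
    proof (intro equalityI subsetI)
      fix M assume "M \<in> {M\<in>T. a \<in># M}"
      then obtain M' where M': "M = add_mset a M'" and "M \<in> T" by (auto dest: multi_member_split)
      then have "set_mset M' \<subseteq> insert a S" "sum_mset M' = n - a" unfolding T_def by auto
      then show "M \<in> add_mset a ` {M. set_mset M \<subseteq> insert a S \<and> sum_mset M = n - a}"
        using M' by blast
    next
      fix M assume "M \<in> add_mset a ` {M. set_mset M \<subseteq> insert a S \<and> sum_mset M = n - a}"
      then show "M \<in> {M\<in>T. a \<in># M}" unfolding T_def using True by auto
    qed
    then show ?thesis using True by simp
  next
    case False
    have "{M\<in>T. a \<in># M} = {}" using False elem_le_sum unfolding T_def by fastforce
    then show ?thesis using False by simp
  qed
  have "card T = card {M\<in>T. a \<notin># M} + card {M\<in>T. a \<in># M}"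
  proof -
    have "T = {M\<in>T. a \<notin># M} \<union> {M\<in>T. a \<in># M}" by auto
    then show ?thesis using fT by (metis (no_types, lifting) card_Un_disjoint disjoint_iff finite_Un mem_Collect_eq)
  qed
  moreover have "card (add_mset a ` {M. set_mset M \<subseteq> insert a S \<and> sum_mset M = n - a}) =
      card {M. set_mset M \<subseteq> insert a S \<and> sum_mset M = n - a}"
    by (rule card_image) (simp add: inj_on_def)
  ultimately show ?thesis unfolding pc_def T_def[symmetric] using T1 T2 by (simp split: if_splits)
qed

definition pgf :: "nat set \<Rightarrow> 'a::comm_ring_1 fps" where
  "pgf S = Abs_fps (\<lambda>n. of_nat (pc S n))"

lemma pgf_empty: "pgf {} = 1"
proof -
  have "pc {} n = (if n = 0 then 1 else 0)" for n
  proof -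
    have "{M :: nat multiset. set_mset M \<subseteq> {} \<and> sum_mset M = n} = (if n = 0 then {{#}} else {})" by auto
    then show ?thesis unfolding pc_def by simp
  qed
  then show ?thesis unfolding pgf_def by (simp add: fps_eq_iff)
qed

lemma pgf_rec: assumes "a \<notin> S" "0 < a" "0 \<notin> S"
  shows "pgf (insert a S) * (1 - fps_X^a) = (pgf S :: 'a::comm_ring_1 fps)"
proof -
  have "(pgf (insert a S) * (1 - fps_X^a) :: 'a fps) $ n = pgf S $ n" for n
  proof -
    have "(pgf (insert a S) * (1 - fps_X^a) :: 'a fps) = pgf (insert a S) - fps_X^a * pgf (insert a S)"
      by (simp add: algebra_simps)
    then show ?thesis using pc_rec[OF assms, of n] by (simp add: pgf_def fps_X_power_mult_nth not_less)
  qed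
  then show ?thesis by (simp add: fps_eq_iff)
qed

lemma pgf_prod: assumes "finite S" "0 \<notin> S"
  shows "pgf S * (\<Prod>a\<in>S. 1 - fps_X^a) = (1 :: 'a::comm_ring_1 fps)"
  using assms
proof (induction S rule: finite_induct)
  case empty then show ?case by (simp add: pgf_empty)
next
  case (insert a S)
  have "pgf (insert a S) * (\<Prod>a\<in>insert a S. 1 - fps_X^a) = (pgf (insert a S) * (1 - fps_X^a)) * (\<Prod>a\<in>S. 1 - (fps_X^a :: 'a fps))"
    using insert by (simp add: ac_simps)
  also have "\<dots> = pgf S * (\<Prod>a\<in>S. 1 - (fps_X^a :: 'a fps))"
    using insert by (subst pgf_rec) auto
  also have "\<dots> = 1" using insert by simp
  finally show ?case .
qed

definition SN :: "nat \<Rightarrow> nat set" where "SN N = {k\<in>{1..N}. \<not> 5 dvd k}"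

lemma b_pc: assumes "n \<le> N" shows "b 5 n = pc (SN N) n"
proof -
  have "{M :: nat multiset. (\<forall>x\<in>#M. 0 < x \<and> \<not> 5 dvd x) \<and> sum_mset M = n} =
        {M. set_mset M \<subseteq> SN N \<and> sum_mset M = n}"
  proof (intro equalityI subsetI)
    fix M assume M: "M \<in> {M :: nat multiset. (\<forall>x\<in>#M. 0 < x \<and> \<not> 5 dvd x) \<and> sum_mset M = n}"
    then have "x \<le> N" if "x \<in># M" for x using elem_le_sum[OF that] assms by auto
    then show "M \<in> {M. set_mset M \<subseteq> SN N \<and> sum_mset M = n}" using M unfolding SN_def by auto
  next
    fix M assume "M \<in> {M. set_mset M \<subseteq> SN N \<and> sum_mset M = n}"
    then show "M \<in> {M :: nat multiset. (\<forall>x\<in>#M. 0 < x \<and> \<not> 5 dvd x) \<and> sum_mset M = n}"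
      unfolding SN_def by auto
  qed
  then show ?thesis unfolding b_def pc_def by simp
qed

lemma eqto_mult: assumes "\<And>k. k \<le> m \<Longrightarrow> f $ k = g $ k"
  shows "(f * h) $ m = (g * h) $ m"
  unfolding fps_mult_nth using assms by (intro sum.cong) auto

definition Bs :: "bit fps" where "Bs = Abs_fps (\<lambda>n. of_nat (b 5 n))"

lemma pr_split5: "pr (fps_X::'a::comm_ring_1 fps) N = (\<Prod>a\<in>SN N. 1 - fps_X^a) * pr (fps_X^5) (N div 5)"
proof -
  have u: "{1..N} = SN N \<union> (\<lambda>i. 5*i) ` {1..N div 5}"
  proof (intro equalityI subsetI)
    fix k assume k: "k \<in> {1..N}"
    show "k \<in> SN N \<union> (\<lambda>i. 5*i) ` {1..N div 5}"
    proof (cases "5 dvd k")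
      case True
      then obtain i where i: "k = 5*i" by blast
      have a1: "5*i \<le> N" "1 \<le> i" using k i by auto
      then have "i \<le> N div 5" using div_le_mono[of "5*i" N 5] by simp
      then have "i \<in> {1..N div 5}" using a1 by auto
      then show ?thesis using i by blast
    next
      case False then show ?thesis using k unfolding SN_def by auto
    qed
  next
    fix k assume k: "k \<in> SN N \<union> (\<lambda>i. 5*i) ` {1..N div 5}"
    show "k \<in> {1..N}"
    proof (cases "k \<in> SN N")
      case True then show ?thesis unfolding SN_def by simp
    next
      case False
      then obtain i where i: "k = 5*i" "1 \<le> i" "i \<le> N div 5" using k by auto
      have "5 * (N div 5) \<le> N" by simp
      then have "5*i \<le> N" using i(3) by linarith
      then show ?thesis using i by simp
    qed
  qed
  have d: "SN N \<inter> (\<lambda>i. 5*i) ` {1..N div 5} = {}" unfolding SN_def by (auto simp del: atLeastAtMost_iff)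
  have f1: "finite (SN N)" unfolding SN_def by simp
  have f2: "finite ((\<lambda>i. 5*i) ` {1..N div 5})" by simp
  have "pr (fps_X::'a fps) N = (\<Prod>a\<in>SN N. 1 - fps_X^a) * (\<Prod>a\<in>(\<lambda>i. 5*i) ` {1..N div 5}. 1 - fps_X^a)"
    unfolding pr_def u by (rule prod.union_disjoint[OF f1 f2 d])
  also have "(\<Prod>a\<in>(\<lambda>i. 5*i) ` {1..N div 5}. 1 - (fps_X::'a fps)^a) = (\<Prod>i\<in>{1..N div 5}. 1 - (fps_X::'a fps)^(5*i))"
  proof -
    have inj: "inj_on (\<lambda>i::nat. 5*i) {1..N div 5}" by (simp add: inj_on_def)
    show ?thesis by (simp only: prod.reindex[OF inj] comp_def)
  qed
  also have "\<dots> = pr (fps_X^5) (N div 5)"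
    unfolding pr_def by (simp only: power_mult)
  finally show ?thesis .
qed

lemma Bs_pr: assumes "m \<le> N" shows "(Bs * pr fps_X N) $ m = pr (fps_X^5 :: bit fps) (N div 5) $ m"
proof -
  have z: "0 \<notin> SN N" unfolding SN_def by auto
  have "(Bs * pr fps_X N) $ m = (pgf (SN N) * pr (fps_X::bit fps) N) $ m"
  proof (rule eqto_mult)
    fix k assume "k \<le> m"
    then show "Bs $ k = pgf (SN N) $ k" using b_pc[of k N] assms by (simp add: Bs_def pgf_def)
  qed
  also have "pgf (SN N) * pr (fps_X::bit fps) N = pr (fps_X^5) (N div 5)"
  proof -
    have e: "pgf (SN N) * (\<Prod>a\<in>SN N. 1 - fps_X^a) = (1::bit fps)"
      by (rule pgf_prod) (simp_all add: SN_def)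
    show ?thesis unfolding pr_split5 mult.assoc[symmetric] e by (rule mult_1_left)
  qed
  finally show ?thesis .
qed




definition dil :: "nat \<Rightarrow> 'a::idom fps \<Rightarrow> 'a fps" where
  "dil k f = f oo fps_X^k"

lemma dil_nth: assumes "0 < k"
  shows "dil k f $ n = (if k dvd n then f $ (n div k) else 0)"
proof -
  have "dil k f $ n = (\<Sum>i\<in>{0..n}. f $ i * ((fps_X^k)^i $ n))"
    unfolding dil_def by (rule fps_compose_nth)
  also have "\<dots> = (\<Sum>i\<in>{0..n}. if i = n div k \<and> k dvd n then f $ i else 0)"
  proof (rule sum.cong[OF refl])
    fix i assume "i \<in> {0..n}"
    have "(fps_X^k)^i $ n = (if n = k * i then 1 else 0)" by (simp add: power_mult[symmetric])
    moreover have "(n = k * i) \<longleftrightarrow> (i = n div k \<and> k dvd n)" using assms by auto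
    ultimately show "f $ i * ((fps_X^k)^i $ n) = (if i = n div k \<and> k dvd n then f $ i else 0)" by auto
  qed
  also have "\<dots> = (if k dvd n then f $ (n div k) else 0)"
  proof (cases "k dvd n")
    case True
    have "n div k \<le> n" by simp
    then show ?thesis using True by (simp add: sum.delta)
  next
    case False then show ?thesis by simp
  qed
  finally show ?thesis .
qed

lemma dil_mult: "0 < k \<Longrightarrow> dil k (f * g) = dil k f * dil k g"
  unfolding dil_def by (rule fps_compose_mult_distrib) simp

lemma dil_dil: assumes "0 < a" "0 < c" shows "dil a (dil c f) = dil (a*c) f"
proof -
  have "dil a (dil c f) = f oo (fps_X^c oo fps_X^a)"
    unfolding dil_def by (rule fps_compose_assoc[symmetric]) (use assms in simp_all)
  also have "(fps_X::'a fps)^c oo fps_X^a = (fps_X oo fps_X^a)^c"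
    by (rule fps_compose_power[symmetric]) (use assms in simp)
  also have "(fps_X::'a fps) oo fps_X^a = fps_X^a"
    by (rule fps_X_fps_compose_startby0) (use assms in simp)
  finally show ?thesis unfolding dil_def by (simp add: power_mult)
qed

lemma dil_pr: assumes "0 < k" shows "pr (fps_X^k :: 'a::idom fps) n = dil k (pr fps_X n)"
proof (induction n)
  case 0 then show ?case by (simp add: dil_def)
next
  case (Suc n)
  have c: "(fps_X::'a fps)^(Suc n) oo fps_X^k = (fps_X^k)^(Suc n)"
  proof -
    have "(fps_X::'a fps)^(Suc n) oo fps_X^k = (fps_X oo fps_X^k)^(Suc n)"
      by (rule fps_compose_power[symmetric]) (use assms in simp)
    also have "(fps_X::'a fps) oo fps_X^k = fps_X^k"
      by (rule fps_X_fps_compose_startby0) (use assms in simp)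
    finally show ?thesis .
  qed
  have "dil k (1 - fps_X^(Suc n) :: 'a fps) = 1 - (fps_X^k)^(Suc n)"
    unfolding dil_def fps_compose_sub_distrib fps_compose_1 c ..
  then show ?case unfolding pr_Suc Suc.IH dil_mult[OF assms] by simp
qed

lemma bit_mult_self [simp]: "(a::bit) * a = a"
  by (cases a) simp_all

lemma frob: "(f::bit fps) * f = dil 2 f"
proof (rule fps_ext)
  fix n
  define h where "h i = f $ i * f $ (n - i)" for i
  define L where "L = {i\<in>{0..n}. 2*i < n}"
  define L' where "L' = {i\<in>{0..n}. 2*i \<le> n}"
  define U where "U = {i\<in>{0..n}. n \<le> 2*i}"
  have "(f * f) $ n = (\<Sum>i\<in>{0..n}. h i)" unfolding h_def fps_mult_nth ..
  also have "{0..n} = L \<union> U" unfolding L_def U_def by auto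
  also have "(\<Sum>i\<in>L \<union> U. h i) = (\<Sum>i\<in>L. h i) + (\<Sum>i\<in>U. h i)"
    by (rule sum.union_disjoint) (auto simp: L_def U_def)
  also have "(\<Sum>i\<in>U. h i) = (\<Sum>i\<in>L'. h i)"
  proof (rule sum.reindex_bij_witness[where i="\<lambda>i. n - i" and j="\<lambda>i. n - i"])
    fix a assume "a \<in> U" then show "n - (n - a) = a" "n - a \<in> L'" unfolding U_def L'_def by auto
  next
    fix a assume a: "a \<in> U"
    then have "n - (n - a) = a" unfolding U_def by auto
    then show "h (n - a) = h a" unfolding h_def by (simp add: mult.commute)
  next
    fix b assume "b \<in> L'" then show "n - (n - b) = b" "n - b \<in> U" unfolding U_def L'_def by auto
  qed
  also have "(\<Sum>i\<in>L'. h i) = (\<Sum>i\<in>L. h i) + (if even n then h (n div 2) else 0)"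
  proof (cases "even n")
    case True
    have "L' = insert (n div 2) L" unfolding L_def L'_def using True by auto
    moreover have "n div 2 \<notin> L" unfolding L_def using True by auto
    ultimately have "(\<Sum>i\<in>L'. h i) = h (n div 2) + (\<Sum>i\<in>L. h i)"
      by (simp add: L_def)
    then show ?thesis using True by (simp only: add.commute if_True)
  next
    case False
    have "2 * x \<noteq> n" for x using False by auto
    then have "L' = L" unfolding L_def L'_def using False by (auto simp: le_less)
    then show ?thesis using False by simp
  qed
  also have "(\<Sum>i\<in>L. h i) + ((\<Sum>i\<in>L. h i) + (if even n then h (n div 2) else 0)) = (if even n then h (n div 2) else 0)"
    by (simp only: add.assoc[symmetric] bit_add_self add_0_left)
  also have "\<dots> = dil 2 f $ n"
  proof (cases "even n")
    case True
    have "n - n div 2 = n div 2" using True by auto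
    then show ?thesis using True by (simp add: dil_nth h_def)
  next
    case False then show ?thesis by (simp add: dil_nth)
  qed
  finally show "(f * f) $ n = dil 2 f $ n" .
qed

definition Uop :: "nat \<Rightarrow> nat \<Rightarrow> 'a::comm_ring_1 fps \<Rightarrow> 'a fps" where
  "Uop k r f = Abs_fps (\<lambda>n. f $ (k*n + r))"

lemma Uop_dil: assumes "0 < k" "r < k"
  shows "Uop k r (f * dil k g) = Uop k r f * (g :: 'a::idom fps)"
proof (rule fps_ext)
  fix n
  have "Uop k r (f * dil k g) $ n = (dil k g * f) $ (k*n + r)" by (simp add: Uop_def mult.commute)
  also have "\<dots> = (\<Sum>i\<in>{0..k*n+r}. dil k g $ i * f $ (k*n + r - i))" by (rule fps_mult_nth)
  also have "\<dots> = (\<Sum>i\<in>{0..k*n+r}. if k dvd i then g $ (i div k) * f $ (k*n + r - i) else 0)"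
    by (rule sum.cong) (simp_all add: dil_nth[OF assms(1)])
  also have "\<dots> = (\<Sum>i\<in>{i\<in>{0..k*n+r}. k dvd i}. g $ (i div k) * f $ (k*n + r - i))"
    by (rule sum.inter_filter[symmetric]) simp
  also have "{i\<in>{0..k*n+r}. k dvd i} = (\<lambda>t. k*t) ` {0..n}"
  proof (intro equalityI subsetI)
    fix i assume i: "i \<in> {i\<in>{0..k*n+r}. k dvd i}"
    then obtain t where t: "i = k*t" by blast
    have "k*t \<le> k*n + r" using i t by simp
    have "t \<le> n"
    proof (rule ccontr)
      assume "\<not> t \<le> n"
      then have "k * Suc n \<le> k * t" by (intro mult_le_mono2) simp
      then show False using \<open>k*t \<le> k*n + r\<close> assms(2) by simp
    qed
    then show "i \<in> (\<lambda>t. k*t) ` {0..n}" using t by auto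
  next
    fix i assume "i \<in> (\<lambda>t. k*t) ` {0..n}"
    then obtain t where "t \<le> n" "i = k*t" by auto
    then show "i \<in> {i\<in>{0..k*n+r}. k dvd i}" by (auto intro: trans_le_add1)
  qed
  also have "(\<Sum>i\<in>(\<lambda>t. k*t) ` {0..n}. g $ (i div k) * f $ (k*n + r - i)) = (\<Sum>t\<in>{0..n}. g $ t * f $ (k*(n-t) + r))"
  proof -
    have inj: "inj_on (\<lambda>t. k*t) {0..n}" using assms by (simp add: inj_on_def)
    have "(\<Sum>i\<in>(\<lambda>t. k*t) ` {0..n}. g $ (i div k) * f $ (k*n + r - i)) = (\<Sum>t\<in>{0..n}. g $ (k*t div k) * f $ (k*n + r - k*t))"
      by (simp add: sum.reindex[OF inj])
    also have "\<dots> = (\<Sum>t\<in>{0..n}. g $ t * f $ (k*(n-t) + r))"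
    proof (rule sum.cong[OF refl])
      fix t assume "t \<in> {0..n}"
      then have "k*n + r - k*t = k*(n-t) + r" by (simp add: diff_mult_distrib2)
      then show "g $ (k*t div k) * f $ (k*n + r - k*t) = g $ t * f $ (k*(n-t) + r)" using assms by simp
    qed
    finally show ?thesis .
  qed
  also have "\<dots> = (g * Uop k r f) $ n" by (simp add: fps_mult_nth Uop_def)
  finally show "Uop k r (f * dil k g) $ n = (Uop k r f * g) $ n" by (simp add: mult.commute)
qed

definition Th :: "('i \<Rightarrow> nat) \<Rightarrow> bit fps" where
  "Th \<phi> = Abs_fps (\<lambda>m. of_nat (card {i. \<phi> i = m}))"

lemma dil_Th: assumes "0 < a" shows "dil a (Th \<phi>) = Th (\<lambda>i. a * \<phi> i)"
proof (rule fps_ext)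
  fix n
  show "dil a (Th \<phi>) $ n = Th (\<lambda>i. a * \<phi> i) $ n"
  proof (cases "a dvd n")
    case True
    then obtain t where t: "n = a*t" by blast
    have "{i. a * \<phi> i = n} = {i. \<phi> i = t}" using assms t by auto
    then show ?thesis using t assms by (simp add: dil_nth Th_def)
  next
    case False
    then have "{i. a * \<phi> i = n} = {}" by auto
    then show ?thesis using False assms by (simp add: dil_nth Th_def)
  qed
qed

lemma Th_mult:
  fixes \<phi> :: "'i \<Rightarrow> nat" and \<psi> :: "'j \<Rightarrow> nat"
  assumes f1: "\<And>u. finite {i. \<phi> i = u}" and f2: "\<And>u. finite {j. \<psi> j = u}"
  shows "(Th \<phi> * Th \<psi>) $ m = of_nat (card {(i,j). \<phi> i + \<psi> j = m})"
proof -
  have eq: "{(i,j). \<phi> i + \<psi> j = m} = (\<Union>u\<in>{0..m}. {i. \<phi> i = u} \<times> {j. \<psi> j = m - u})"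
    by auto
  have "card {(i,j). \<phi> i + \<psi> j = m} = (\<Sum>u\<in>{0..m}. card ({i. \<phi> i = u} \<times> {j. \<psi> j = m - u}))"
    unfolding eq by (rule card_UN_disjoint) (use f1 f2 in auto)
  also have "\<dots> = (\<Sum>u\<in>{0..m}. card {i. \<phi> i = u} * card {j. \<psi> j = m - u})"
    by (simp add: card_cartesian_product)
  finally have "card {(i,j). \<phi> i + \<psi> j = m} = (\<Sum>u\<in>{0..m}. card {i. \<phi> i = u} * card {j. \<psi> j = m - u})" .
  then show ?thesis by (simp add: fps_mult_nth Th_def)
qed




lemma pent_int: "2 * int (pent j) = j * (3*j - 1)" by (rule two_pent)

lemma five_dvd_lemma: assumes "5 dvd (j*(3*j-1) - 2 :: int)" shows "5 dvd (j - 1)"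
proof -
  have p5: "prime (5::int)" by simp
  have "j*(3*j-1) - 2 = (3*j+2)*(j-1)" by (simp add: algebra_simps)
  with assms have "5 dvd (3*j+2)*(j-1)" by simp
  then have "5 dvd (3*j+2) \<or> 5 dvd (j-1)" by (simp only: prime_dvd_mult_iff[OF p5])
  then show ?thesis
  proof
    assume a: "5 dvd (3*j+2)"
    have "3*(j-1) = (3*j+2) - 5" by simp
    then have "5 dvd 3*(j-1)" using a by (metis dvd_diff dvd_refl)
    then have "5 dvd (3::int) \<or> 5 dvd (j-1)" by (simp only: prime_dvd_mult_iff[OF p5])
    then show ?thesis by simp
  qed
qed

lemma pent_shift5: "pent (1 - 5*u) = 25 * pent u + 1"
proof -
  have "2 * int (pent (1 - 5*u)) = 2 * int (25 * pent u + 1)"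
    unfolding pent_int of_nat_add of_nat_mult of_nat_1 distrib_left
    using pent_int[of u] by (simp add: algebra_simps)
  then show ?thesis by simp
qed

definition SG :: "nat \<Rightarrow> (int \<times> int) set" where
  "SG N = {(i,j). 2 * pent i + 5 * pent j = N}"

lemma NT1: "card (SG (25*m + 7)) = card (SG m)"
proof -
  define f where "f = (\<lambda>(i::int,j::int). (1 - 5*i, 1 - 5*j))"
  define g where "g = (\<lambda>(i::int,j::int). ((1 - i) div 5, (1 - j) div 5))"
  have mem: "5 dvd (1 - i) \<and> 5 dvd (1 - j)" if "(i,j) \<in> SG (25*m+7)" for i j
  proof -
    have e: "2 * int (pent i) + 5 * int (pent j) = 25 * int m + 7"
      using that unfolding SG_def by simp
    have "5 dvd (i*(3*i-1) - 2)"
    proof -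
      have "i*(3*i-1) - 2 = 5 * (5 * int m + 1 - int (pent j))" using e pent_int[of i] by simp
      then show ?thesis by simp
    qed
    then have di: "5 dvd (i - 1)" by (rule five_dvd_lemma)
    then obtain w where w: "i - 1 = 5 * w" by blast
    define u where "u = - w"
    have u: "i = 1 - 5*u" using w unfolding u_def by simp
    have pu: "int (pent i) = 25 * int (pent u) + 1" unfolding u pent_shift5 by simp
    have "5 dvd (j*(3*j-1) - 2)"
    proof -
      have "j*(3*j-1) - 2 = 5 * (2 * int m - 4 * int (pent u))" using e pu pent_int[of j] by simp
      then show ?thesis by simp
    qed
    then have "5 dvd (j - 1)" by (rule five_dvd_lemma)
    then show ?thesis using di by (simp add: dvd_diff_commute)
  qed
  have "bij_betw f (SG m) (SG (25*m+7))"
  proof (rule bij_betw_byWitness[where f'=g])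
    show "\<forall>a\<in>SG m. g (f a) = a"
    proof
      fix a assume "a \<in> SG m"
      obtain i j where ij: "a = (i,j)" by (cases a)
      have "(1 - (1 - 5*i)) div 5 = i" "(1 - (1 - 5*j)) div 5 = j" by simp_all
      then show "g (f a) = a" unfolding f_def g_def ij by simp
    qed
    show "\<forall>a'\<in>SG (25*m+7). f (g a') = a'"
    proof
      fix a' assume a': "a' \<in> SG (25*m+7)"
      obtain i j where ij: "a' = (i,j)" by (cases a')
      then have "5 dvd (1 - i)" "5 dvd (1 - j)" using mem a' by auto
      then have "1 - 5 * ((1 - i) div 5) = i" "1 - 5 * ((1 - j) div 5) = j" by (simp_all add: dvd_mult_div_cancel)
      then show "f (g a') = a'" unfolding f_def g_def ij by simp
    qed
    show "f ` SG m \<subseteq> SG (25*m+7)"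
    proof
      fix x assume "x \<in> f ` SG m"
      then obtain i j where "(i,j) \<in> SG m" "x = (1 - 5*i, 1 - 5*j)" unfolding f_def by auto
      then show "x \<in> SG (25*m+7)" unfolding SG_def by (simp add: pent_shift5)
    qed
    show "g ` SG (25*m+7) \<subseteq> SG m"
    proof
      fix x assume "x \<in> g ` SG (25*m+7)"
      then obtain i j where ij: "(i,j) \<in> SG (25*m+7)" "x = ((1 - i) div 5, (1 - j) div 5)" unfolding g_def by auto
      then have d: "5 dvd (1 - i)" "5 dvd (1 - j)" using mem by auto
      obtain u where u: "1 - i = 5 * u" using d(1) by blast
      obtain v where v: "1 - j = 5 * v" using d(2) by blast
      have i: "i = 1 - 5*u" and j: "j = 1 - 5*v" using u v by simp_all
      have "x = (u, v)" using ij(2) u v by simp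
      moreover have "2 * pent (1 - 5*u) + 5 * pent (1 - 5*v) = 25*m+7"
        using ij(1) unfolding SG_def i j by simp
      then have "2 * pent u + 5 * pent v = m" unfolding pent_shift5 by simp
      ultimately show "x \<in> SG m" unfolding SG_def by simp
    qed
  qed
  then show ?thesis by (simp add: bij_betw_same_card)
qed

definition V2 :: "int \<Rightarrow> int \<Rightarrow> int" where "V2 j k = 5 * (j*(3*j-1)) + k*(k+1)"
definition SZ :: "nat \<Rightarrow> (int \<times> int) set" where "SZ N = {(j,k). 5 * pent j + tri k = N}"
definition SH :: "nat \<Rightarrow> (int \<times> nat) set" where "SH N = {(j,k). 5 * pent j + tri (int k) = N}"

lemma SZ_V2: "(j,k) \<in> SZ N \<longleftrightarrow> V2 j k = 2 * int N"
proof -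
  have "2 * int (5 * pent j + tri k) = V2 j k"
    unfolding V2_def using two_pent[of j] two_tri[of k] by simp
  then show ?thesis unfolding SZ_def by auto
qed

definition phi :: "int \<times> int \<Rightarrow> int \<times> int" where
  "phi = (\<lambda>(j,k). if even (k+j) then (-((k+j) div 2), (k - 15*j + 2) div 2)
                  else ((k - j + 1) div 2, (k + 15*j - 3) div 2))"

definition psi :: "int \<times> int \<Rightarrow> int \<times> int" where
  "psi = (\<lambda>(J,K). if 8 dvd (1-J-K) then ((1-J-K) div 8, -2*J - (1-J-K) div 8)
                  else ((K-J+2) div 8, 2*J - 1 + (K-J+2) div 8))"

lemma phi_even: assumes "k + j = 2*s" shows "phi (j,k) = (-s, s - 8*j + 1)"
proof -
  have ev: "even (k+j)" using assms by simp
  have d1: "(k+j) div 2 = s" using assms by simp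
  have "k - 15*j + 2 = 2*(s - 8*j + 1)" using assms by simp
  then have d2: "(k - 15*j + 2) div 2 = s - 8*j + 1" by simp
  have "phi (j,k) = (-((k+j) div 2), (k - 15*j + 2) div 2)"
    unfolding phi_def by (simp only: case_prod_conv if_P[OF ev])
  then show ?thesis by (simp only: d1 d2)
qed

lemma phi_odd: assumes "k - j + 1 = 2*s" shows "phi (j,k) = (s, s + 8*j - 2)"
proof -
  have od: "\<not> even (k + j)"
  proof
    assume "even (k+j)"
    moreover have "k + j = 2*s + 2*j - 1" using assms by simp
    ultimately show False by simp
  qed
  have d1: "(k - j + 1) div 2 = s" using assms by simp
  have "k + 15*j - 3 = 2*(s + 8*j - 2)" using assms by simp
  then have d2: "(k + 15*j - 3) div 2 = s + 8*j - 2" by simp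
  have "phi (j,k) = ((k - j + 1) div 2, (k + 15*j - 3) div 2)"
    unfolding phi_def by (simp only: case_prod_conv if_not_P[OF od])
  then show ?thesis by (simp only: d1 d2)
qed

lemma phi_V2: "V2 (fst (phi (j,k))) (snd (phi (j,k))) = 4 * V2 j k + 2"
proof (cases "even (k+j)")
  case True
  then obtain s where s: "k + j = 2*s" by blast
  then have k: "k = 2*s - j" by simp
  have p: "phi (j,k) = (-s, s - 8*j + 1)" by (rule phi_even[OF s])
  have "V2 (-s) (s - 8*j + 1) = 4 * V2 j (2*s - j) + 2" by (simp add: V2_def algebra_simps)
  then show ?thesis using p k by simp
next
  case False
  then have "even (k - j + 1)" by simp
  then obtain s where s: "k - j + 1 = 2*s" by blast
  then have k: "k = 2*s + j - 1" by simp
  have p: "phi (j,k) = (s, s + 8*j - 2)" by (rule phi_odd[OF s])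
  have "V2 s (s + 8*j - 2) = 4 * V2 j (2*s + j - 1) + 2" by (simp add: V2_def algebra_simps)
  then show ?thesis using p k by simp
qed

lemma psi_phi: "psi (phi (j,k)) = (j,k)"
proof (cases "even (k+j)")
  case True
  then obtain s where s: "k + j = 2*s" by blast
  have e: "1 - (-s) - (s - 8*j + 1) = 8*j" by simp
  have dv: "8 dvd (1 - (-s) - (s - 8*j + 1))" unfolding e by simp
  have "psi (-s, s - 8*j + 1) = ((1 - (-s) - (s - 8*j + 1)) div 8, -2*(-s) - (1 - (-s) - (s - 8*j + 1)) div 8)"
    unfolding psi_def by (simp only: case_prod_conv if_P[OF dv])
  also have "\<dots> = (j, k)" unfolding e using s by simp
  finally show ?thesis unfolding phi_even[OF s] .
next
  case False
  then have "even (k - j + 1)" by simp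
  then obtain s where s: "k - j + 1 = 2*s" by blast
  have e: "1 - s - (s + 8*j - 2) = 2 * (1 - s - 4*j) + 1" by simp
  have nd: "\<not> 8 dvd (1 - s - (s + 8*j - 2))"
  proof
    assume "8 dvd (1 - s - (s + 8*j - 2))"
    then have "2 dvd (1 - s - (s + 8*j - 2))" by (rule dvd_trans[rotated]) simp
    then show False unfolding e by simp
  qed
  have e2: "(s + 8*j - 2) - s + 2 = 8*j" by simp
  have "psi (s, s + 8*j - 2) = (((s + 8*j - 2) - s + 2) div 8, 2*s - 1 + ((s + 8*j - 2) - s + 2) div 8)"
    unfolding psi_def by (simp only: case_prod_conv if_not_P[OF nd])
  also have "\<dots> = (j, k)" unfolding e2 using s by simp
  finally show ?thesis unfolding phi_odd[OF s] .
qed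

lemma odd_8: assumes "odd (a::int)" "8 dvd a*c" shows "8 dvd c"
proof -
  obtain t where t: "a = 2*t + 1" using assms(1) by (metis oddE)
  have "even (t*(t+1))" by simp
  then obtain u where u: "t*(t+1) = 2*u" by blast
  have au: "a*a - 1 = 8*u" using t u by (simp add: algebra_simps)
  have d1: "8 dvd a*(a*c)" using assms(2) by (rule dvd_mult)
  have d2: "8 dvd (a*a - 1)*c" unfolding au by simp
  have eq: "a*(a*c) - (a*a - 1)*c = c" by (simp add: algebra_simps)
  have "8 dvd a*(a*c) - (a*a - 1)*c" using d1 d2 by (rule dvd_diff)
  then show ?thesis unfolding eq .
qed

lemma mod8: assumes "V2 J K = 8*m + 2" shows "8 dvd (1-J-K) \<or> 8 dvd (K-J+2)"
proof -
  have id: "(K-9*J+2)*(K+9*J-1) = V2 J K - 96*J*J + 32*J - 2"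
    unfolding V2_def by (simp add: algebra_simps)
  have "(K-9*J+2)*(K+9*J-1) = 8*(m - 12*J*J + 4*J)"
    unfolding id assms by (simp add: algebra_simps)
  then have dv: "8 dvd (K-9*J+2)*(K+9*J-1)" by simp
  show ?thesis
  proof (cases "odd (K-9*J+2)")
    case True
    have "8 dvd (K+9*J-1)" by (rule odd_8[OF True dv])
    moreover have "1-J-K = 8*J - (K+9*J-1)" by simp
    ultimately have "8 dvd (1-J-K)" by (metis dvd_diff dvd_triv_left)
    then show ?thesis ..
  next
    case False
    have d: "(K+9*J-1) = (K-9*J+2) + 2*(9*J) - 3" by simp
    have od: "odd (K+9*J-1)" using False unfolding d by simp
    have dv': "8 dvd (K+9*J-1)*(K-9*J+2)" using dv by (simp only: mult.commute)
    have "8 dvd (K-9*J+2)" by (rule odd_8[OF od dv'])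
    moreover have "K-J+2 = (K-9*J+2) + 8*J" by simp
    ultimately have "8 dvd (K-J+2)" by (metis dvd_add dvd_triv_left)
    then show ?thesis ..
  qed
qed

lemma phi_psi: assumes "V2 J K = 8*m + 2" shows "phi (psi (J,K)) = (J,K)"
proof (cases "8 dvd (1-J-K)")
  case True
  then obtain j where j: "1-J-K = 8*j" by blast
  have ps: "psi (J,K) = (j, -2*J - j)" unfolding psi_def using True j by simp
  have "(-2*J - j) + j = 2*(-J)" by simp
  then have "phi (j, -2*J - j) = (-(-J), -J - 8*j + 1)" by (rule phi_even)
  moreover have "-J - 8*j + 1 = K" using j by simp
  ultimately show ?thesis using ps by simp
next
  case False
  then have "8 dvd (K-J+2)" using mod8[OF assms] by simp
  then obtain j where j: "K-J+2 = 8*j" by blast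
  have ps: "psi (J,K) = (j, 2*J - 1 + j)" unfolding psi_def using False j by simp
  have "(2*J - 1 + j) - j + 1 = 2*J" by simp
  then have "phi (j, 2*J - 1 + j) = (J, J + 8*j - 2)" by (rule phi_odd)
  moreover have "J + 8*j - 2 = K" using j by simp
  ultimately show ?thesis using ps by simp
qed

lemma NT2Z: "card (SZ (4*m+1)) = card (SZ m)"
proof -
  have "bij_betw phi (SZ m) (SZ (4*m+1))"
  proof (rule bij_betw_byWitness[where f'=psi])
    show "\<forall>a\<in>SZ m. psi (phi a) = a" by (auto simp: psi_phi)
    show "\<forall>a'\<in>SZ (4*m+1). phi (psi a') = a'"
    proof
      fix a' assume a': "a' \<in> SZ (4*m+1)"
      obtain J K where JK: "a' = (J,K)" by (cases a')
      have "V2 J K = 8 * int m + 2" using a' unfolding JK SZ_V2 by simp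
      then show "phi (psi a') = a'" unfolding JK by (rule phi_psi)
    qed
    show "phi ` SZ m \<subseteq> SZ (4*m+1)"
    proof
      fix x assume "x \<in> phi ` SZ m"
      then obtain j k where jk: "(j,k) \<in> SZ m" "x = phi (j,k)" by auto
      have "V2 j k = 2 * int m" using jk(1) by (simp add: SZ_V2)
      then have "V2 (fst x) (snd x) = 2 * int (4*m+1)" using phi_V2[of j k] jk(2) by simp
      then show "x \<in> SZ (4*m+1)" by (metis SZ_V2 prod.collapse)
    qed
    show "psi ` SZ (4*m+1) \<subseteq> SZ m"
    proof
      fix x assume "x \<in> psi ` SZ (4*m+1)"
      then obtain J K where JK: "(J,K) \<in> SZ (4*m+1)" "x = psi (J,K)" by auto
      have v: "V2 J K = 8 * int m + 2" using JK(1) by (simp add: SZ_V2)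
      have "phi x = (J,K)" using phi_psi[OF v] JK(2) by simp
      then have "4 * V2 (fst x) (snd x) + 2 = V2 J K" using phi_V2[of "fst x" "snd x"] by simp
      then have "V2 (fst x) (snd x) = 2 * int m" using v by simp
      then show "x \<in> SZ m" by (metis SZ_V2 prod.collapse)
    qed
  qed
  then show ?thesis by (simp add: bij_betw_same_card)
qed

lemma finite_SH: "finite (SH N)"
proof (rule finite_subset)
  show "SH N \<subseteq> {-int N..int N} \<times> {..N+1}"
  proof
    fix x assume "x \<in> SH N"
    then obtain j k where x: "x = (j,k)" "5 * pent j + tri (int k) = N" unfolding SH_def by auto
    have "\<bar>j\<bar> \<le> int N" using pent_ge[of j] x(2) by simp
    moreover have "k \<le> N+1" using tri_ge[of "int k"] x(2) by simp
    ultimately show "x \<in> {-int N..int N} \<times> {..N+1}" using x(1) by auto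
  qed
qed simp

lemma card_SZ_double: "card (SZ N) = 2 * card (SH N)"
proof -
  define f1 where "f1 = (\<lambda>(j::int,k::nat). (j, int k))"
  define f2 where "f2 = (\<lambda>(j::int,k::nat). (j, -1 - int k))"
  have eq: "SZ N = f1 ` SH N \<union> f2 ` SH N"
  proof (intro equalityI subsetI)
    fix x assume x: "x \<in> SZ N"
    obtain j k where jk: "x = (j,k)" by (cases x)
    show "x \<in> f1 ` SH N \<union> f2 ` SH N"
    proof (cases "k \<ge> 0")
      case True
      then have "(j, nat k) \<in> SH N" "x = f1 (j, nat k)" using x jk unfolding SZ_def SH_def f1_def by auto
      then show ?thesis by blast
    next
      case False
      have "int (nat (-1 - k)) = -1 - k" using False by simp
      then have "tri (int (nat (-1 - k))) = tri k" using tri_neg[of k] by simp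
      then have "(j, nat (-1 - k)) \<in> SH N" "x = f2 (j, nat (-1 - k))"
        using x jk False unfolding SZ_def SH_def f2_def by auto
      then show ?thesis by blast
    qed
  next
    fix x assume "x \<in> f1 ` SH N \<union> f2 ` SH N"
    then show "x \<in> SZ N" unfolding SZ_def SH_def f1_def f2_def using tri_neg by auto
  qed
  have "card (f1 ` SH N \<union> f2 ` SH N) = card (f1 ` SH N) + card (f2 ` SH N)"
    by (rule card_Un_disjoint) (use finite_SH in \<open>auto simp: f1_def f2_def\<close>)
  also have "card (f1 ` SH N) = card (SH N)" by (rule card_image) (auto simp: inj_on_def f1_def)
  also have "card (f2 ` SH N) = card (SH N)" by (rule card_image) (auto simp: inj_on_def f2_def)
  finally show ?thesis using eq by simp
qed

lemma NT2: "card (SH (4*m+1)) = card (SH m)"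
  using NT2Z[of m] card_SZ_double[of m] card_SZ_double[of "4*m+1"] by simp




definition Fi :: "bit fps" where "Fi = Abs_fps (\<lambda>m. pr fps_X m $ m)"

lemma Fi_pr: assumes "m \<le> N" shows "pr fps_X N $ m = Fi $ m"
proof -
  have "pr ((fps_X::bit fps)^1) N $ m = pr (fps_X^1) m $ m" by (rule pr_stable) (use assms in auto)
  then show ?thesis by (simp add: Fi_def)
qed

definition agree :: "nat \<Rightarrow> bit fps \<Rightarrow> bit fps \<Rightarrow> bool" where
  "agree m f g \<longleftrightarrow> (\<forall>k\<le>m. f $ k = g $ k)"

lemma agree_mult: assumes "agree m f g" "agree m f' g'" shows "agree m (f * f') (g * g')"
  unfolding agree_def
proof (intro allI impI)
  fix k assume k: "k \<le> m"
  show "(f * f') $ k = (g * g') $ k"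
    unfolding fps_mult_nth using assms k unfolding agree_def by (intro sum.cong) auto
qed

lemma agree_Fi: "m \<le> N \<Longrightarrow> agree m Fi (pr fps_X N)"
  unfolding agree_def using Fi_pr by auto

lemma Fi_Th: "Fi = Th pent"
proof (rule fps_ext)
  fix m
  have "Fi $ m = pr fps_X m $ m" using Fi_pr[of m m] by simp
  also have "\<dots> = of_nat (card {j::int. pent j = m})" by (rule euler_bit) simp
  finally show "Fi $ m = Th pent $ m" by (simp add: Th_def)
qed

lemma Fi3: "Fi * Fi * Fi = Th (\<lambda>k::nat. tri (int k))"
proof (rule fps_ext)
  fix m
  have a: "agree m (Fi * Fi * Fi) (pr fps_X (Suc m) * pr fps_X (Suc m) * pr fps_X m)"
    by (intro agree_mult agree_Fi) simp_all
  have "(Fi * Fi * Fi) $ m = (pr fps_X (Suc m) * pr fps_X (Suc m) * pr fps_X m) $ m"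
    using a unfolding agree_def by simp
  also have "\<dots> = of_nat (card {k::nat. tri (int k) = m})" by (rule gauss_bit)
  finally show "(Fi * Fi * Fi) $ m = Th (\<lambda>k::nat. tri (int k)) $ m" by (simp add: Th_def)
qed

lemma BsF: "Bs * Fi = dil 5 Fi"
proof (rule fps_ext)
  fix m
  have "(Bs * Fi) $ m = (Fi * Bs) $ m" by (simp add: mult.commute)
  also have "\<dots> = (pr fps_X (5*m) * Bs) $ m"
    by (rule eqto_mult) (simp add: Fi_pr)
  also have "\<dots> = (Bs * pr fps_X (5*m)) $ m" by (simp add: mult.commute)
  also have "\<dots> = pr (fps_X^5 :: bit fps) (5*m div 5) $ m" by (rule Bs_pr) simp
  also have "\<dots> = dil 5 (pr fps_X m) $ m" by (simp add: dil_pr)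
  also have "\<dots> = dil 5 Fi $ m"
    by (simp add: dil_nth Fi_pr)
  finally show "(Bs * Fi) $ m = dil 5 Fi $ m" .
qed

lemma Fi_nz: "Fi \<noteq> 0"
proof
  assume "Fi = 0"
  then have "Fi $ 0 = 0" by simp
  moreover have "Fi $ 0 = 1" by (simp add: Fi_def pr_def)
  ultimately show False by simp
qed

definition G :: "bit fps" where "G = dil 2 Fi * dil 5 Fi"
definition H :: "bit fps" where "H = dil 5 Fi * (Fi * Fi * Fi)"

lemma fin_pent: "finite {j::int. c * pent j = u}" if "0 < c"
proof (rule finite_subset)
  show "{j::int. c * pent j = u} \<subseteq> {-int u..int u}"
  proof
    fix j assume "j \<in> {j::int. c * pent j = u}"
    then have e: "c * pent j = u" by simp
    have "pent j \<le> c * pent j" using that by (cases c) simp_all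
    then have "pent j \<le> u" using e by simp
    then show "j \<in> {-int u..int u}" using pent_ge[of j] by auto
  qed
qed simp

lemma fin_tri: "finite {k::nat. tri (int k) = u}" by (rule finite_tri)

lemma G_nth: "G $ n = of_nat (card (SG n))"
proof -
  have "G = Th (\<lambda>i. 2 * pent i) * Th (\<lambda>j. 5 * pent j)"
    unfolding G_def Fi_Th by (simp add: dil_Th)
  then have "G $ n = of_nat (card {(i,j). 2 * pent i + 5 * pent j = n})"
    using Th_mult[of "\<lambda>i. 2 * pent i" "\<lambda>j. 5 * pent j" n] fin_pent by simp
  then show ?thesis unfolding SG_def .
qed

lemma H_nth: "H $ n = of_nat (card (SH n))"
proof -
  have "H = Th (\<lambda>j. 5 * pent j) * Th (\<lambda>k::nat. tri (int k))"
    unfolding H_def Fi3 unfolding Fi_Th by (simp add: dil_Th)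
  then have "H $ n = of_nat (card {(j,k). 5 * pent j + tri (int k) = n})"
    using Th_mult[of "\<lambda>j. 5 * pent j" "\<lambda>k::nat. tri (int k)" n] fin_pent fin_tri by simp
  then show ?thesis unfolding SH_def .
qed

lemma U41: "Uop 4 1 Bs = G"
proof -
  have F4: "Fi * Fi * Fi * Fi = dil 4 Fi"
  proof -
    have "Fi * Fi * Fi * Fi = dil 2 Fi * dil 2 Fi" by (simp add: frob[symmetric] ac_simps)
    also have "\<dots> = dil 2 (dil 2 Fi)" by (rule frob)
    also have "\<dots> = dil 4 Fi" by (simp add: dil_dil)
    finally show ?thesis .
  qed
  have "Bs * dil 4 Fi = H" unfolding F4[symmetric] H_def BsF[symmetric] by (simp add: ac_simps)
  then have "Uop 4 1 Bs * Fi = Uop 4 1 H" using Uop_dil[of 4 1 Bs Fi] by simp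
  also have "Uop 4 1 H = H"
  proof (rule fps_ext)
    fix n show "Uop 4 1 H $ n = H $ n" using NT2[of n] by (simp add: Uop_def H_nth)
  qed
  also have "H = G * Fi" unfolding H_def G_def by (simp add: frob[symmetric] ac_simps)
  finally show ?thesis using Fi_nz by simp
qed

lemma UG: "G $ (25*n + 7) = G $ n"
  by (simp add: G_nth NT1)

lemma c_rec: "7 * 25^a = 6 * ((7 * 25^a - 1) div 6) + (1::nat)"
proof -
  have "6 dvd (7 * 25^a - (1::nat))"
  proof (induction a)
    case 0 then show ?case by simp
  next
    case (Suc a)
    define x :: nat where "x = 7 * 25^a"
    have x1: "x \<ge> 1" unfolding x_def by simp
    have xs: "7 * 25^(Suc a) = 25 * x" unfolding x_def by simp
    have "25 * x - 1 = 25 * (x - 1) + 24" using x1 by (cases x) simp_all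
    then have "7 * 25^(Suc a) - (1::nat) = 25 * (x - 1) + 24" unfolding xs .
    moreover have "6 dvd (x - 1)" using Suc.IH unfolding x_def .
    ultimately show ?case by simp
  qed
  then obtain q where q: "7 * 25^a - (1::nat) = 6 * q" by blast
  have ge: "7 * 25^a \<ge> (1::nat)" by simp
  have "7 * 25^a = 6 * q + 1" using q ge by linarith
  moreover have "(7 * 25^a - 1) div 6 = q" using q by simp
  ultimately show ?thesis by simp
qed

lemma main_bit: "Bs $ (4 * 25^a * n + (7 * 25^a - 1) div 6) = G $ n"
proof (induction a arbitrary: n)
  case 0
  have "Bs $ (4 * n + 1) = Uop 4 1 Bs $ n" by (simp add: Uop_def)
  also have "\<dots> = G $ n" by (simp only: U41)
  finally show ?case by simp
next
  case (Suc a)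
  define c :: nat where "c = (7 * 25^a - 1) div 6"
  define c' :: nat where "c' = (7 * 25^(Suc a) - 1) div 6"
  have h1: "7 * 25^a = 6 * c + 1" unfolding c_def by (rule c_rec)
  have h2: "7 * 25^(Suc a) = 6 * c' + 1" unfolding c'_def by (rule c_rec)
  have "6 * c' + 1 = 25 * (6 * c + 1)" using h1 h2 by simp
  then have "c' = 25 * c + 4" by simp
  then have idx: "4 * 25^(Suc a) * n + c' = 4 * 25^a * (25*n + 7) + c"
    using h1 by (simp add: algebra_simps)
  have "Bs $ (4 * 25^(Suc a) * n + c') = G $ (25*n + 7)"
    unfolding idx c_def by (rule Suc.IH)
  then show ?case unfolding c'_def by (simp add: UG)
qed

lemma bit_of_int: "(of_int x :: bit) = (if even x then 0 else 1)"
proof -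
  have "x = 2 * (x div 2) + x mod 2" by simp
  then have "(of_int x :: bit) = of_int (2 * (x div 2)) + of_int (x mod 2)"
    by (metis of_int_add)
  also have "(of_int (2 * (x div 2)) :: bit) = 0" by simp
  finally have e: "(of_int x :: bit) = of_int (x mod 2)" by simp
  show ?thesis
  proof (cases "even x")
    case True then have "x mod 2 = 0" by simp
    then show ?thesis using e True by simp
  next
    case False then have "x mod 2 = 1" by (simp add: odd_iff_mod_2_eq_one)
    then show ?thesis using e False by simp
  qed
qed

lemma bit_cong: assumes "(of_int x :: bit) = of_int y" shows "[x = y] (mod 2)"
proof -
  have "even x \<longleftrightarrow> even y" using assms unfolding bit_of_int by (auto split: if_splits)
  then have "x mod 2 = y mod 2" by (metis odd_iff_mod_2_eq_one even_iff_mod_2_eq_zero)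
  then show ?thesis by (simp add: cong_def)
qed

lemma euler_trunc_pr: "euler_trunc a n = pr (fps_X^a) n"
  unfolding euler_trunc_def pr_def by (simp add: power_mult)

lemma fprod_bit: "(of_int (fprod_coeff 2 5 n) :: bit) = G $ n"
proof -
  have "(of_int (fprod_coeff 2 5 n) :: bit) = red (euler_trunc 2 n * euler_trunc 5 n) $ n"
    by (simp add: fprod_coeff_def)
  also have "red (euler_trunc 2 n * euler_trunc 5 n) = pr (fps_X^2) n * pr (fps_X^5) n"
    by (simp add: red_mult euler_trunc_pr red_pr)
  also have "\<dots> = dil 2 (pr fps_X n) * dil 5 (pr fps_X n)" by (simp add: dil_pr)
  also have "(dil 2 (pr fps_X n) * dil 5 (pr fps_X n)) $ n = G $ n"
  proof -
    have "agree n (dil 2 (pr fps_X n) * dil 5 (pr fps_X n)) (dil 2 Fi * dil 5 Fi)"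
    proof (rule agree_mult)
      show "agree n (dil 2 (pr fps_X n)) (dil 2 Fi)" unfolding agree_def
        by (auto simp: dil_nth Fi_pr)
      show "agree n (dil 5 (pr fps_X n)) (dil 5 Fi)" unfolding agree_def
        by (auto simp: dil_nth Fi_pr)
    qed
    then show ?thesis unfolding agree_def G_def by simp
  qed
  finally show ?thesis .
qed

theorem lemma3p19:
  fixes \<alpha> n :: nat
  shows "[int (b 5 (4 * 5 ^ (2 * \<alpha>) * n + (7 * 5 ^ (2 * \<alpha>) - 1) div 6))
          = fprod_coeff 2 5 n] (mod 2)"
proof (rule bit_cong)
  have p: "(5::nat) ^ (2 * \<alpha>) = 25 ^ \<alpha>" by (simp add: power_mult)
  have "(of_int (int (b 5 (4 * 5 ^ (2 * \<alpha>) * n + (7 * 5 ^ (2 * \<alpha>) - 1) div 6))) :: bit)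
      = Bs $ (4 * 25^\<alpha> * n + (7 * 25^\<alpha> - 1) div 6)"
    unfolding p by (simp add: Bs_def)
  also have "\<dots> = G $ n" by (rule main_bit)
  also have "\<dots> = of_int (fprod_coeff 2 5 n)" by (rule fprod_bit[symmetric])
  finally show "(of_int (int (b 5 (4 * 5 ^ (2 * \<alpha>) * n + (7 * 5 ^ (2 * \<alpha>) - 1) div 6))) :: bit) = of_int (fprod_coeff 2 5 n)" .
qed



end
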